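(* Let $\lambda/\mu$ be a border strip, let $P_{\lambda/\mu}=P_{\lambda/\mu}(\mathbf{p})$ be a mobile poset with underlying border strip $\lambda/\mu$, and let $\omega$ be a labeling of it that is a reversed Schur labeling on the border-strip cells and natural on the hanging $d$-complete posets (i.e. $\omega(x)<\omega(y)$ whenever $y$ covers $x$ and $x$ lies in a hanging $d$-complete poset). Then $$e_q^{\mathrm{maj}}(P_{\lambda/\mu},\omega)=\sum_{\mu\to\nu} q^{|P_{\lambda/\nu_1}|}\, e_q^{\mathrm{maj}}(P_{\lambda/\nu},\omega_\nu),$$ where the sum is over all inner corners $u$ of $\lambda/\mu$ (with $\nu$ the partition with $[\nu]=[\mu]\cup\{u\}$), $P_{\lambda/\nu}$ is the poset $P_{\lambda/\mu}$ with the element $u$ removed, $\omega_\nu$ is the restriction of $\omega$ to $P_{\lambda/\nu}$, and $P_{\lambda/\nu_1}$ is the subposet consisting of the border-strip cells of content less than $c(u)$ together with all elements of the $d$-complete posets hanging from those cells.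
   Context: English notation: $[\lambda]=\{(i,j):1\le i\le\ell(\lambda),1\le j\le\lambda_i\}$, $[\lambda/\mu]=[\lambda]\setminus[\mu]$, content $c(i,j)=j-i$. A border strip is a skew shape whose diagram is edge-connected with no $2\times2$ square. The border strip poset on $[\lambda/\mu]$ has $(i,j)\le(i',j')$ iff $i\ge i'$ and $j\ge j'$; an inner corner is a cell $u\in[\lambda/\mu]$ with $[\mu]\cup\{u\}$ a partition diagram (these are maximal). A mobile poset is obtained by choosing for each cell $x$ a finite (possibly empty) family of disjoint connected $d$-complete posets (Proctor), each with a unique maximal element, and letting $x$ cover each of these maximal elements. A reversed Schur labeling on the border strip: listing strip cells in increasing order of content, their labels strictly decrease. For a poset $R$ with injective labeling $\omega_R$ into $\mathbb{Z}$ and $|R|=r$, each order-preserving bijection $g:R\to[r]$ gives the word $\sigma=\omega_R\circ g^{-1}$; $\mathrm{maj}(\sigma)=\sum_{i:\sigma_i>\sigma_{i+1}}i$, and $e_q^{\mathrm{maj}}(R,\omega_R)=\sum_g q^{\mathrm{maj}(\omega_R\circ g^{-1})}$. *)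

theory Defs
  imports Main "HOL-Library.FuncSet"
begin

definition is_partition :: "nat list \<Rightarrow> bool" where
  "is_partition la \<longleftrightarrow> sorted_wrt (\<ge>) la \<and> 0 \<notin> set la"

definition diagram :: "nat list \<Rightarrow> (nat \<times> nat) set" where
  "diagram la = {(i, j). 1 \<le> i \<and> i \<le> length la \<and> 1 \<le> j \<and> j \<le> la ! (i - 1)}"

definition skew :: "nat list \<Rightarrow> nat list \<Rightarrow> (nat \<times> nat) set" where
  "skew la mu = diagram la - diagram mu"

definition content :: "nat \<times> nat \<Rightarrow> int" where
  "content c = int (snd c) - int (fst c)"

definition cell_adj :: "nat \<times> nat \<Rightarrow> nat \<times> nat \<Rightarrow> bool" where
  "cell_adj c d \<longleftrightarrow>
     (fst c = fst d \<and> (snd d = snd c + 1 \<or> snd c = snd d + 1)) \<or>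
     (snd c = snd d \<and> (fst d = fst c + 1 \<or> fst c = fst d + 1))"

definition edge_connected :: "(nat \<times> nat) set \<Rightarrow> bool" where
  "edge_connected S \<longleftrightarrow>
     (\<forall>c\<in>S. \<forall>d\<in>S. (c, d) \<in> {(x, y). x \<in> S \<and> y \<in> S \<and> cell_adj x y}\<^sup>*)"

definition border_strip :: "nat list \<Rightarrow> nat list \<Rightarrow> bool" where
  "border_strip la mu \<longleftrightarrow>
     is_partition la \<and> is_partition mu \<and> diagram mu \<subseteq> diagram la \<and>
     skew la mu \<noteq> {} \<and> edge_connected (skew la mu) \<and>
     \<not> (\<exists>i j. {(i, j), (i + 1, j), (i, j + 1), (i + 1, j + 1)} \<subseteq> skew la mu)"

definition inner_corners :: "nat list \<Rightarrow> nat list \<Rightarrow> (nat \<times> nat) set" where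
  "inner_corners la mu =
     {u \<in> skew la mu. \<exists>nu. is_partition nu \<and> diagram nu = insert u (diagram mu)}"

definition bs_le :: "nat \<times> nat \<Rightarrow> nat \<times> nat \<Rightarrow> bool" where
  "bs_le c d \<longleftrightarrow> fst d \<le> fst c \<and> snd d \<le> snd c"

definition poset_on :: "'a set \<Rightarrow> ('a \<Rightarrow> 'a \<Rightarrow> bool) \<Rightarrow> bool" where
  "poset_on A le \<longleftrightarrow> (\<forall>x\<in>A. le x x) \<and>
     (\<forall>x\<in>A. \<forall>y\<in>A. le x y \<and> le y x \<longrightarrow> x = y) \<and>
     (\<forall>x\<in>A. \<forall>y\<in>A. \<forall>z\<in>A. le x y \<and> le y z \<longrightarrow> le x z)"

definition covers :: "'a set \<Rightarrow> ('a \<Rightarrow> 'a \<Rightarrow> bool) \<Rightarrow> 'a \<Rightarrow> 'a \<Rightarrow> bool" where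
  "covers A le x y \<longleftrightarrow> x \<in> A \<and> y \<in> A \<and> le x y \<and> x \<noteq> y \<and>
     \<not> (\<exists>z\<in>A. le x z \<and> le z y \<and> z \<noteq> x \<and> z \<noteq> y)"

definition maximals :: "'a set \<Rightarrow> ('a \<Rightarrow> 'a \<Rightarrow> bool) \<Rightarrow> 'a set" where
  "maximals I le = {x \<in> I. \<forall>y\<in>I. le x y \<longrightarrow> y = x}"

definition minimals :: "'a set \<Rightarrow> ('a \<Rightarrow> 'a \<Rightarrow> bool) \<Rightarrow> 'a set" where
  "minimals I le = {x \<in> I. \<forall>y\<in>I. le y x \<longrightarrow> y = x}"

definition order_iso :: "'a set \<Rightarrow> ('a \<Rightarrow> 'a \<Rightarrow> bool) \<Rightarrow> 'b set \<Rightarrow> ('b \<Rightarrow> 'b \<Rightarrow> bool) \<Rightarrow> bool" where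
  "order_iso A le B le' \<longleftrightarrow>
     (\<exists>f. bij_betw f A B \<and> (\<forall>x\<in>A. \<forall>y\<in>A. le x y \<longleftrightarrow> le' (f x) (f y)))"

definition convex_in :: "'a set \<Rightarrow> ('a \<Rightarrow> 'a \<Rightarrow> bool) \<Rightarrow> 'a set \<Rightarrow> bool" where
  "convex_in A le I \<longleftrightarrow> I \<subseteq> A \<and> (\<forall>x\<in>I. \<forall>z\<in>I. \<forall>y\<in>A. le x y \<and> le y z \<longrightarrow> y \<in> I)"

definition interval_in :: "'a set \<Rightarrow> ('a \<Rightarrow> 'a \<Rightarrow> bool) \<Rightarrow> 'a \<Rightarrow> 'a \<Rightarrow> 'a set" where
  "interval_in A le w z = {y \<in> A. le w y \<and> le y z}"

text \<open>The double-tailed diamond d_k(1), k >= 3, on {0..<2k-2}: a chain 0..k-3, two incomparable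
  elements k-2 and k-1, then a chain k..2k-3. d_k^-(1) is the same with the top 2k-3 removed,
  i.e. carrier {0..<2k-3}.\<close>
definition dk_le :: "nat \<Rightarrow> nat \<Rightarrow> nat \<Rightarrow> bool" where
  "dk_le k a b \<longleftrightarrow> a = b \<or> (a < b \<and> \<not> (a = k - 2 \<and> b = k - 1))"

definition dk_interval :: "'a set \<Rightarrow> ('a \<Rightarrow> 'a \<Rightarrow> bool) \<Rightarrow> nat \<Rightarrow> 'a set \<Rightarrow> bool" where
  "dk_interval A le k I \<longleftrightarrow>
     (\<exists>w\<in>A. \<exists>z\<in>A. I = interval_in A le w z) \<and> order_iso I le {0..<2*k-2} (dk_le k)"

definition dk_minus_convex :: "'a set \<Rightarrow> ('a \<Rightarrow> 'a \<Rightarrow> bool) \<Rightarrow> nat \<Rightarrow> 'a set \<Rightarrow> bool" where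
  "dk_minus_convex A le k I \<longleftrightarrow> convex_in A le I \<and> order_iso I le {0..<2*k-3} (dk_le k)"

definition d_complete :: "'a set \<Rightarrow> ('a \<Rightarrow> 'a \<Rightarrow> bool) \<Rightarrow> bool" where
  "d_complete A le \<longleftrightarrow> finite A \<and> poset_on A le \<and>
     (\<forall>k\<ge>3.
       (\<forall>I. dk_minus_convex A le k I \<longrightarrow>
          (\<exists>v\<in>A. (\<forall>m\<in>maximals I le. covers A le m v) \<and> dk_interval A le k (insert v I))) \<and>
       (\<forall>w\<in>A. \<forall>z\<in>A. dk_interval A le k (interval_in A le w z) \<longrightarrow>
          (\<forall>y\<in>A. covers A le y z \<longrightarrow> y \<in> interval_in A le w z)) \<and>
       (\<forall>I I'. dk_minus_convex A le k I \<and> dk_minus_convex A le k I' \<and>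
          I - minimals I le = I' - minimals I' le \<longrightarrow> I = I'))"

text \<open>Elements are Inl c (c a cell of the border strip) or Inr b (b an element of the
  hanging d-complete posets). H with order hle is the disjoint union of the hanging posets;
  its connected components (w.r.t. comparability) are the individual hanging posets, and
  att b is the cell from which the component of b hangs (the cell covering its maximum).\<close>

definition hang_comp :: "'b set \<Rightarrow> ('b \<Rightarrow> 'b \<Rightarrow> bool) \<Rightarrow> 'b \<Rightarrow> 'b set" where
  "hang_comp H hle b =
     {b' \<in> H. (b, b') \<in> {(x, y). x \<in> H \<and> y \<in> H \<and> (hle x y \<or> hle y x)}\<^sup>*}"

definition mobile_data ::
  "(nat \<times> nat) set \<Rightarrow> 'b set \<Rightarrow> ('b \<Rightarrow> 'b \<Rightarrow> bool) \<Rightarrow> ('b \<Rightarrow> nat \<times> nat) \<Rightarrow> bool" where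
  "mobile_data S H hle att \<longleftrightarrow> finite H \<and> poset_on H hle \<and>
     (\<forall>b\<in>H. att b \<in> S) \<and>
     (\<forall>b\<in>H. \<forall>b'\<in>H. hle b b' \<longrightarrow> att b = att b') \<and>
     (\<forall>b\<in>H. d_complete (hang_comp H hle b) hle \<and>
             (\<exists>m. maximals (hang_comp H hle b) hle = {m}))"

definition mob_carrier :: "(nat \<times> nat) set \<Rightarrow> 'b set \<Rightarrow> ((nat \<times> nat) + 'b) set" where
  "mob_carrier S H = Inl ` S \<union> Inr ` H"

definition mob_le ::
  "('b \<Rightarrow> 'b \<Rightarrow> bool) \<Rightarrow> ('b \<Rightarrow> nat \<times> nat) \<Rightarrow> (nat \<times> nat) + 'b \<Rightarrow> (nat \<times> nat) + 'b \<Rightarrow> bool" where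
  "mob_le hle att x y = (case (x, y) of
       (Inl c, Inl d) \<Rightarrow> bs_le c d
     | (Inr b, Inr b') \<Rightarrow> hle b b'
     | (Inr b, Inl c) \<Rightarrow> bs_le (att b) c
     | (Inl c, Inr b) \<Rightarrow> False)"

definition lin_exts :: "'a set \<Rightarrow> ('a \<Rightarrow> 'a \<Rightarrow> bool) \<Rightarrow> ('a \<Rightarrow> nat) set" where
  "lin_exts R le = {g \<in> extensional R. bij_betw g R {1..card R} \<and>
       (\<forall>x\<in>R. \<forall>y\<in>R. le x y \<longrightarrow> g x \<le> g y)}"

text \<open>maj of the word sigma = omega o g^-1, sigma_i = omega (g^-1 i).\<close>
definition maj_of :: "'a set \<Rightarrow> ('a \<Rightarrow> int) \<Rightarrow> ('a \<Rightarrow> nat) \<Rightarrow> nat" where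
  "maj_of R w g = (\<Sum>i\<in>{i. 1 \<le> i \<and> i < card R \<and>
       w (inv_into R g (i + 1)) < w (inv_into R g i)}. i)"

definition emaj :: "'a set \<Rightarrow> ('a \<Rightarrow> 'a \<Rightarrow> bool) \<Rightarrow> ('a \<Rightarrow> int) \<Rightarrow> 'c::comm_semiring_1 \<Rightarrow> 'c" where
  "emaj R le w q = (\<Sum>g\<in>lin_exts R le. q ^ maj_of R w g)"

end

theory Submission
  imports Defs
begin

lemma rank_props:
  fixes r :: "'a \<Rightarrow> 'a \<Rightarrow> bool"
  assumes fin: "finite R"
    and irr: "\<And>x. x \<in> R \<Longrightarrow> \<not> r x x"
    and tr: "\<And>x y z. x \<in> R \<Longrightarrow> y \<in> R \<Longrightarrow> z \<in> R \<Longrightarrow> r x y \<Longrightarrow> r y z \<Longrightarrow> r x z"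
    and tot: "\<And>x y. x \<in> R \<Longrightarrow> y \<in> R \<Longrightarrow> x \<noteq> y \<Longrightarrow> r x y \<or> r y x"
  shows "bij_betw (\<lambda>x. Suc (card {y\<in>R. r y x})) R {1..card R}"
    and "\<And>x y. x \<in> R \<Longrightarrow> y \<in> R \<Longrightarrow>
           Suc (card {z\<in>R. r z x}) < Suc (card {z\<in>R. r z y}) \<longleftrightarrow> r x y"
proof -
  define h where "h = (\<lambda>x. Suc (card {y\<in>R. r y x}))"
  have lt: "h x < h y" if "x \<in> R" "y \<in> R" "r x y" for x y
  proof -
    have "{z\<in>R. r z x} \<subseteq> {z\<in>R. r z y}"
      using that tr by blast
    moreover have "x \<in> {z\<in>R. r z y}" "x \<notin> {z\<in>R. r z x}" using that irr by auto
    ultimately have "{z\<in>R. r z x} \<subset> {z\<in>R. r z y}" by blast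
    then show ?thesis unfolding h_def using fin by (simp add: psubset_card_mono)
  qed
  have iff: "h x < h y \<longleftrightarrow> r x y" if "x \<in> R" "y \<in> R" for x y
  proof
    assume a: "h x < h y"
    show "r x y"
    proof (rule ccontr)
      assume "\<not> r x y"
      then have "x = y \<or> r y x" using tot that by blast
      then show False using lt[of y x] that a by auto
    qed
  qed (rule lt[OF that])
  then show "\<And>x y. x \<in> R \<Longrightarrow> y \<in> R \<Longrightarrow>
           Suc (card {z\<in>R. r z x}) < Suc (card {z\<in>R. r z y}) \<longleftrightarrow> r x y"
    unfolding h_def by blast
  have inj: "inj_on h R"
  proof (rule inj_onI)
    fix x y assume xy: "x \<in> R" "y \<in> R" "h x = h y"
    show "x = y"
    proof (rule ccontr)
      assume "x \<noteq> y"
      then have "r x y \<or> r y x" using tot xy by blast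
      then show False using lt[of x y] lt[of y x] xy by auto
    qed
  qed
  have sub: "h ` R \<subseteq> {1..card R}"
  proof
    fix k assume "k \<in> h ` R"
    then obtain x where x: "x \<in> R" "k = h x" by auto
    have "{y\<in>R. r y x} \<subseteq> R - {x}" using irr x by auto
    then have "card {y\<in>R. r y x} \<le> card (R - {x})" using fin by (intro card_mono) auto
    also have "... = card R - 1" using x fin by simp
    finally have "card {y\<in>R. r y x} \<le> card R - 1" .
    moreover have "card R > 0" using fin x card_gt_0_iff by blast
    ultimately show "k \<in> {1..card R}" using x unfolding h_def by auto
  qed
  have "card (h ` R) = card {1..card R}" using card_image[OF inj] by simp
  then have "h ` R = {1..card R}" using sub by (intro card_subset_eq) auto
  then show "bij_betw (\<lambda>x. Suc (card {y\<in>R. r y x})) R {1..card R}"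
    using inj by (simp add: bij_betw_def h_def)
qed

definition pp :: "'a set \<Rightarrow> ('a \<Rightarrow> 'a \<Rightarrow> bool) \<Rightarrow> ('a \<Rightarrow> int) \<Rightarrow> ('a \<Rightarrow> nat) set" where
  "pp R le w = {f. (\<forall>x. x \<notin> R \<longrightarrow> f x = 0) \<and>
     (\<forall>x\<in>R. \<forall>y\<in>R. le x y \<longrightarrow> f y \<le> f x \<and> (w y < w x \<longrightarrow> f y < f x))}"

definition descset :: "'a set \<Rightarrow> ('a \<Rightarrow> int) \<Rightarrow> ('a \<Rightarrow> nat) \<Rightarrow> nat set" where
  "descset R w g = {i. 1 \<le> i \<and> i < card R \<and> w (inv_into R g (i + 1)) < w (inv_into R g i)}"

lemma maj_descset: "maj_of R w g = (\<Sum>i\<in>descset R w g. i)"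
  unfolding maj_of_def descset_def by simp

definition Seq :: "nat \<Rightarrow> nat set \<Rightarrow> (nat \<Rightarrow> nat) set" where
  "Seq m D = {s. (\<forall>i. i \<notin> {1..m} \<longrightarrow> s i = 0) \<and>
     (\<forall>i\<in>{1..m}. s (Suc i) + (if i \<in> D then 1 else 0) \<le> s i)}"

definition prec :: "('a \<Rightarrow> nat) \<Rightarrow> ('a \<Rightarrow> int) \<Rightarrow> 'a \<Rightarrow> 'a \<Rightarrow> bool" where
  "prec f w y x \<longleftrightarrow> f x < f y \<or> (f y = f x \<and> w y < w x)"

definition rk :: "'a set \<Rightarrow> ('a \<Rightarrow> int) \<Rightarrow> ('a \<Rightarrow> nat) \<Rightarrow> 'a \<Rightarrow> nat" where
  "rk R w f = restrict (\<lambda>x. Suc (card {y\<in>R. prec f w y x})) R"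

definition Fw :: "'a set \<Rightarrow> ('a \<Rightarrow> nat) \<Rightarrow> (nat \<Rightarrow> nat) \<Rightarrow> 'a \<Rightarrow> nat" where
  "Fw R g s = (\<lambda>x. if x \<in> R then s (g x) else 0)"

definition Bs :: "'a set \<Rightarrow> ('a \<Rightarrow> nat) \<Rightarrow> ('a \<Rightarrow> nat) \<Rightarrow> nat \<Rightarrow> nat" where
  "Bs R f g = (\<lambda>i. if i \<in> {1..card R} then f (inv_into R g i) else 0)"

lemma seq_mono_step:
  assumes "s \<in> Seq m D" "1 \<le> j" shows "s (Suc j) \<le> s j"
proof (cases "j \<le> m")
  case True
  then have "s (Suc j) + (if j \<in> D then 1 else 0) \<le> s j"
    using assms unfolding Seq_def by auto
  then show ?thesis by linarith
next
  case False
  then show ?thesis using assms unfolding Seq_def by auto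
qed

lemma seq_mono:
  assumes "s \<in> Seq m D" "1 \<le> i" "i \<le> j" shows "s j \<le> s i"
  using assms(3)
proof (induction j rule: dec_induct)
  case (step k)
  then show ?case using seq_mono_step[OF assms(1), of k] assms(2) by linarith
qed simp

locale fund =
  fixes R :: "'a set" and le :: "'a \<Rightarrow> 'a \<Rightarrow> bool" and w :: "'a \<Rightarrow> int"
  assumes fin: "finite R" and winj: "inj_on w R"
begin

abbreviation "n \<equiv> card R"

lemma prec_props:
  shows "\<And>x. \<not> prec f w x x"
    and "\<And>x y z. prec f w x y \<Longrightarrow> prec f w y z \<Longrightarrow> prec f w x z"
    and "\<And>x y. x \<in> R \<Longrightarrow> y \<in> R \<Longrightarrow> x \<noteq> y \<Longrightarrow> prec f w x y \<or> prec f w y x"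
proof -
  show "\<And>x. \<not> prec f w x x" by (simp add: prec_def)
  show "\<And>x y z. prec f w x y \<Longrightarrow> prec f w y z \<Longrightarrow> prec f w x z"
    unfolding prec_def by force
  show "prec f w x y \<or> prec f w y x" if "x \<in> R" "y \<in> R" "x \<noteq> y" for x y
  proof -
    have "w x \<noteq> w y" using winj that by (meson inj_onD)
    then show ?thesis unfolding prec_def by linarith
  qed
qed

lemma rk_bij: "bij_betw (rk R w f) R {1..n}"
proof -
  have "bij_betw (\<lambda>x. Suc (card {y\<in>R. prec f w y x})) R {1..n}"
    by (rule rank_props(1)[OF fin]) (use prec_props in blast)+
  then show ?thesis unfolding rk_def
    by (rule bij_betw_cong[THEN iffD1, rotated]) auto
qed

lemma rk_less: "x \<in> R \<Longrightarrow> y \<in> R \<Longrightarrow> rk R w f x < rk R w f y \<longleftrightarrow> prec f w x y"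
  unfolding rk_def using rank_props(2)[OF fin, of "prec f w"] prec_props by auto

lemma bij_facts:
  assumes "bij_betw g R {1..n}"
  shows "\<And>x. x \<in> R \<Longrightarrow> inv_into R g (g x) = x"
    and "\<And>i. i \<in> {1..n} \<Longrightarrow> g (inv_into R g i) = i"
    and "\<And>i. i \<in> {1..n} \<Longrightarrow> inv_into R g i \<in> R"
    and "\<And>x. x \<in> R \<Longrightarrow> g x \<in> {1..n}"
  using assms
  by (auto simp: bij_betw_def inv_into_f_f f_inv_into_f inv_into_into)

end

lemma bij_betw_restrict_pred:
  assumes "bij_betw h A B" "\<And>a. a \<in> A \<Longrightarrow> P a \<longleftrightarrow> Q (h a)"
  shows "bij_betw h {a\<in>A. P a} {b\<in>B. Q b}"
proof -
  have inj: "inj_on h {a\<in>A. P a}" using assms(1) unfolding bij_betw_def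
    by (rule inj_on_subset[OF conjunct1]) auto
  have "h ` {a\<in>A. P a} = {b\<in>B. Q b}"
  proof
    show "h ` {a\<in>A. P a} \<subseteq> {b\<in>B. Q b}" using assms unfolding bij_betw_def by auto
    show "{b\<in>B. Q b} \<subseteq> h ` {a\<in>A. P a}"
    proof
      fix b assume b: "b \<in> {b\<in>B. Q b}"
      then obtain a where a: "a \<in> A" "b = h a" using assms(1) unfolding bij_betw_def by auto
      then show "b \<in> h ` {a\<in>A. P a}" using b assms(2)[OF a(1)] by auto
    qed
  qed
  then show ?thesis using inj unfolding bij_betw_def by blast
qed

lemma finite_funs_bounded:
  assumes "finite A"
  shows "finite {s :: 'a \<Rightarrow> nat. (\<forall>i. i \<notin> A \<longrightarrow> s i = 0) \<and> sum s A = N}"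
proof -
  have "{s :: 'a \<Rightarrow> nat. (\<forall>i. i \<notin> A \<longrightarrow> s i = 0) \<and> sum s A = N}
        \<subseteq> {f. \<forall>x. (x \<in> A \<longrightarrow> f x \<in> {0..N}) \<and> (x \<notin> A \<longrightarrow> f x = 0)}"
  proof (clarsimp)
    fix s :: "'a \<Rightarrow> nat" and x assume "\<forall>i. i \<notin> A \<longrightarrow> s i = 0" "x \<in> A" "N = sum s A"
    then show "s x \<le> sum s A" using assms by (simp add: member_le_sum)
  qed
  moreover have "finite {f. \<forall>x. (x \<in> A \<longrightarrow> f x \<in> {0..N}) \<and> (x \<notin> A \<longrightarrow> f x = (0::nat))}"
    using assms by (intro finite_set_of_finite_funs) auto
  ultimately show ?thesis by (rule finite_subset)
qed

lemma finite_SeqN: "finite {s \<in> Seq m D. sum s {1..m} = N \<and> P s}"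
  by (rule finite_subset[OF _ finite_funs_bounded[of "{1..m}" N]]) (auto simp: Seq_def)

lemma finite_ppN: "finite R \<Longrightarrow> finite {f \<in> pp R le w. sum f R = N \<and> P f}"
  by (rule finite_subset[OF _ finite_funs_bounded[of R N]]) (auto simp: pp_def)

lemma finite_lin_exts: "finite R \<Longrightarrow> finite (lin_exts R le)"
proof -
  assume fin: "finite R"
  have "lin_exts R le \<subseteq> {f. \<forall>x. (x \<in> R \<longrightarrow> f x \<in> {1..card R}) \<and> (x \<notin> R \<longrightarrow> f x = undefined)}"
    unfolding lin_exts_def bij_betw_def extensional_def by auto
  moreover have "finite {f. \<forall>x. (x \<in> R \<longrightarrow> f x \<in> {1..card R}) \<and> (x \<notin> R \<longrightarrow> f x = (undefined::nat))}"
    using fin by (intro finite_set_of_finite_funs) auto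
  ultimately show ?thesis by (rule finite_subset)
qed

context fund begin

lemma chain_lemma:
  assumes g: "bij_betw g R {1..n}" and s: "s \<in> Seq n (descset R w g)"
    and i: "1 \<le> i" "i \<le> j"
  shows "j \<le> n \<longrightarrow> s j < s i \<or> w (inv_into R g i) \<le> w (inv_into R g j)"
  using i(2)
proof (induction j rule: dec_induct)
  case base then show ?case by simp
next
  case (step k)
  show ?case
  proof
    assume kn: "Suc k \<le> n"
    have IH: "s k < s i \<or> w (inv_into R g i) \<le> w (inv_into R g k)" using step kn by simp
    have k1: "1 \<le> k" "k < n" using step i kn by auto
    have sk: "s (Suc k) + (if k \<in> descset R w g then 1 else 0) \<le> s k"
      using s k1 unfolding Seq_def by auto
    have ski: "s k \<le> s i" using seq_mono[OF s i(1) step(1)] .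
    show "s (Suc k) < s i \<or> w (inv_into R g i) \<le> w (inv_into R g (Suc k))"
    proof (cases "k \<in> descset R w g")
      case True then show ?thesis using sk ski by auto
    next
      case False
      then have "w (inv_into R g k) \<le> w (inv_into R g (Suc k))"
        using k1 unfolding descset_def by auto
      then show ?thesis using IH sk by auto
    qed
  qed
qed

lemma Fw_pp:
  assumes g: "g \<in> lin_exts R le" and s: "s \<in> Seq n (descset R w g)"
  shows "Fw R g s \<in> pp R le w"
proof -
  have gb: "bij_betw g R {1..n}" and gm: "\<And>x y. x \<in> R \<Longrightarrow> y \<in> R \<Longrightarrow> le x y \<Longrightarrow> g x \<le> g y"
    using g unfolding lin_exts_def by auto
  note bf = bij_facts[OF gb]
  show ?thesis unfolding pp_def Fw_def
  proof (intro CollectI conjI allI impI ballI)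
    fix x y assume xy: "x \<in> R" "y \<in> R" "le x y"
    have gx: "1 \<le> g x" "g y \<le> n" using bf(4) xy by auto
    show "(if y \<in> R then s (g y) else 0) \<le> (if x \<in> R then s (g x) else 0)"
      using seq_mono[OF s gx(1) gm[OF xy]] xy by simp
    assume "w y < w x"
    then show "(if y \<in> R then s (g y) else 0) < (if x \<in> R then s (g x) else 0)"
      using chain_lemma[OF gb s gx(1) gm[OF xy]] gx bf(1) xy by auto
  qed auto
qed

lemma pp_rk:
  assumes f: "f \<in> pp R le w"
  shows "rk R w f \<in> lin_exts R le"
proof -
  have "rk R w f x \<le> rk R w f y" if xy: "x \<in> R" "y \<in> R" "le x y" for x y
  proof (cases "x = y")
    case False
    have "w x \<noteq> w y" using winj False xy by (meson inj_onD)
    moreover have "f y \<le> f x" "w y < w x \<longrightarrow> f y < f x" using f xy unfolding pp_def by auto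
    ultimately have "prec f w x y" unfolding prec_def by auto
    then have "rk R w f x < rk R w f y" using rk_less[OF xy(1,2)] by blast
    then show ?thesis by simp
  qed simp
  then show ?thesis unfolding lin_exts_def using rk_bij[of f]
    by (auto simp: rk_def)
qed

lemma pp_Bs:
  assumes f: "f \<in> pp R le w"
  shows "Bs R f (rk R w f) \<in> Seq n (descset R w (rk R w f))"
proof -
  let ?g = "rk R w f"
  let ?s = "inv_into R ?g"
  note bf = bij_facts[OF rk_bij[of f]]
  have "Bs R f ?g (Suc i) + (if i \<in> descset R w ?g then 1 else 0) \<le> Bs R f ?g i"
    if i: "i \<in> {1..n}" for i
  proof (cases "i < n")
    case True
    have i1: "Suc i \<in> {1..n}" using True by auto
    have "?g (?s i) < ?g (?s (Suc i))" using bf(2)[OF i] bf(2)[OF i1] by simp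
    then have "prec f w (?s i) (?s (Suc i))" using rk_less bf(3)[OF i] bf(3)[OF i1] by blast
    then show ?thesis unfolding Bs_def prec_def descset_def using i i1 by auto
  next
    case False
    then show ?thesis unfolding Bs_def descset_def by auto
  qed
  then show ?thesis unfolding Seq_def Bs_def by auto
qed

lemma Fw_Bs:
  assumes f: "f \<in> pp R le w"
  shows "Fw R (rk R w f) (Bs R f (rk R w f)) = f"
proof
  fix x
  note bf = bij_facts[OF rk_bij[of f]]
  show "Fw R (rk R w f) (Bs R f (rk R w f)) x = f x"
  proof (cases "x \<in> R")
    case True
    then show ?thesis unfolding Fw_def Bs_def using bf(1,4)[OF True] by simp
  next
    case False
    then show ?thesis using f unfolding Fw_def pp_def by auto
  qed
qed

lemma rk_Fw:
  assumes g: "g \<in> lin_exts R le" and s: "s \<in> Seq n (descset R w g)"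
  shows "rk R w (Fw R g s) = g"
proof
  fix x
  have gb: "bij_betw g R {1..n}" and ge: "g \<in> extensional R"
    using g unfolding lin_exts_def by auto
  note bf = bij_facts[OF gb]
  let ?F = "Fw R g s"
  have bk: "prec ?F w y x" if xy: "x \<in> R" "y \<in> R" "g y < g x" for x y
  proof -
    have gy: "1 \<le> g y" "g x \<le> n" using bf(4) xy by auto
    have "s (g x) < s (g y) \<or> w y \<le> w x"
      using chain_lemma[OF gb s gy(1), of "g x"] xy gy bf(1) by auto
    moreover have "s (g x) \<le> s (g y)" using seq_mono[OF s gy(1)] xy by simp
    moreover have "w y \<noteq> w x" using winj xy by (metis inj_onD less_irrefl)
    ultimately show ?thesis unfolding prec_def Fw_def using xy by auto
  qed
  show "rk R w ?F x = g x"
  proof (cases "x \<in> R")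
    case False
    then show ?thesis using ge unfolding rk_def by (simp add: extensional_def)
  next
    case True
    have eq: "{y\<in>R. prec ?F w y x} = {y\<in>R. g y < g x}"
    proof (intro Collect_cong conj_cong refl)
      fix y assume y: "y \<in> R"
      show "prec ?F w y x \<longleftrightarrow> g y < g x"
      proof
        assume p: "prec ?F w y x"
        show "g y < g x"
        proof (rule ccontr)
          assume "\<not> g y < g x"
          then have "g x = g y \<or> g x < g y" by auto
          then show False
          proof
            assume "g x = g y"
            then have "x = y" using gb True y unfolding bij_betw_def by (meson inj_onD)
            then show False using p prec_props(1) by metis
          next
            assume "g x < g y"
            then have "prec ?F w x y" using bk True y by blast
            then show False using p prec_props(1,2) by metis
          qed
        qed
      qed (rule bk[OF True y])
    qed
    have "bij_betw g {y\<in>R. g y < g x} {1..<g x}"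
    proof -
      have "inj_on g {y\<in>R. g y < g x}" using gb unfolding bij_betw_def
        by (rule inj_on_subset[OF conjunct1]) auto
      moreover have "g ` {y\<in>R. g y < g x} = {1..<g x}"
      proof
        show "g ` {y\<in>R. g y < g x} \<subseteq> {1..<g x}" using bf(4) by auto
        show "{1..<g x} \<subseteq> g ` {y\<in>R. g y < g x}"
        proof
          fix i assume i: "i \<in> {1..<g x}"
          then have i': "i \<in> {1..n}" using bf(4)[OF True] by auto
          then show "i \<in> g ` {y\<in>R. g y < g x}"
            using bf(2,3)[OF i'] i by (metis (mono_tags, lifting) atLeastLessThan_iff image_eqI mem_Collect_eq)
        qed
      qed
      ultimately show ?thesis unfolding bij_betw_def by blast
    qed
    then have "card {y\<in>R. g y < g x} = g x - 1" by (simp add: bij_betw_same_card)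
    then show ?thesis unfolding rk_def using True eq bf(4)[OF True] by auto
  qed
qed

lemma Bs_Fw:
  assumes g: "g \<in> lin_exts R le" and s: "s \<in> Seq n (descset R w g)"
  shows "Bs R (Fw R g s) g = s"
proof
  fix i
  have gb: "bij_betw g R {1..n}" using g unfolding lin_exts_def by auto
  note bf = bij_facts[OF gb]
  show "Bs R (Fw R g s) g i = s i"
    using s bf(2,3) unfolding Bs_def Fw_def Seq_def by auto
qed

lemma fund_bij:
  "bij_betw (\<lambda>(g, s). Fw R g s) (SIGMA g:lin_exts R le. Seq n (descset R w g)) (pp R le w)"
proof (rule bij_betw_byWitness[where f' = "\<lambda>f. (rk R w f, Bs R f (rk R w f))"])
  show "\<forall>a\<in>SIGMA g:lin_exts R le. Seq n (descset R w g).
          (\<lambda>f. (rk R w f, Bs R f (rk R w f))) ((\<lambda>(g, s). Fw R g s) a) = a"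
    using rk_Fw Bs_Fw by auto
  show "\<forall>a'\<in>pp R le w. (\<lambda>(g, s). Fw R g s) (rk R w a', Bs R a' (rk R w a')) = a'"
    using Fw_Bs by auto
  show "(\<lambda>(g, s). Fw R g s) ` (SIGMA g:lin_exts R le. Seq n (descset R w g)) \<subseteq> pp R le w"
    using Fw_pp by auto
  show "(\<lambda>f. (rk R w f, Bs R f (rk R w f))) ` pp R le w
        \<subseteq> (SIGMA g:lin_exts R le. Seq n (descset R w g))"
    using pp_rk pp_Bs by auto
qed

lemma card_pp_gen:
  assumes "\<And>g s. g \<in> lin_exts R le \<Longrightarrow> s \<in> Seq n (descset R w g) \<Longrightarrow>
             sum (Fw R g s) R = sum s {1..n}"
  assumes "\<And>g s. g \<in> lin_exts R le \<Longrightarrow> s \<in> Seq n (descset R w g) \<Longrightarrow> P (Fw R g s) \<longleftrightarrow> Q s"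
  shows "card {f \<in> pp R le w. sum f R = N \<and> P f} =
    (\<Sum>g\<in>lin_exts R le. card {s \<in> Seq n (descset R w g). sum s {1..n} = N \<and> Q s})"
proof -
  have b: "bij_betw (\<lambda>(g, s). Fw R g s)
      {a \<in> (SIGMA g:lin_exts R le. Seq n (descset R w g)). sum (snd a) {1..n} = N \<and> Q (snd a)}
      {f \<in> pp R le w. sum f R = N \<and> P f}"
  proof (rule bij_betw_restrict_pred[OF fund_bij])
    fix a assume a: "a \<in> (SIGMA g:lin_exts R le. Seq n (descset R w g))"
    obtain g s where gs: "a = (g, s)" by (cases a)
    have g: "g \<in> lin_exts R le" and s: "s \<in> Seq n (descset R w g)" using a gs by auto
    show "(sum (snd a) {1..n} = N \<and> Q (snd a)) \<longleftrightarrow>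
          (\<lambda>f. sum f R = N \<and> P f) ((\<lambda>(g, s). Fw R g s) a)"
      unfolding gs using assms(1)[OF g s] assms(2)[OF g s] by simp
  qed
  have e: "{a \<in> (SIGMA g:lin_exts R le. Seq n (descset R w g)). sum (snd a) {1..n} = N \<and> Q (snd a)}
     = (SIGMA g:lin_exts R le. {s \<in> Seq n (descset R w g). sum s {1..n} = N \<and> Q s})"
    by (rule set_eqI) (simp add: split_paired_all)
  have "card {f \<in> pp R le w. sum f R = N \<and> P f} =
      card (SIGMA g:lin_exts R le. {s \<in> Seq n (descset R w g). sum s {1..n} = N \<and> Q s})"
    using bij_betw_same_card[OF b] e by simp
  also have "... = (\<Sum>g\<in>lin_exts R le. card {s \<in> Seq n (descset R w g). sum s {1..n} = N \<and> Q s})"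
  proof (rule card_SigmaI[OF finite_lin_exts[OF fin]])
    show "\<forall>a\<in>lin_exts R le. finite {s \<in> Seq n (descset R w a). sum s {1..n} = N \<and> Q s}"
      using finite_SeqN by blast
  qed
  finally show ?thesis .
qed

lemma sum_Fw:
  assumes g: "g \<in> lin_exts R le"
  shows "sum (Fw R g s) R = sum s {1..n}"
proof -
  have gb: "bij_betw g R {1..n}" using g unfolding lin_exts_def by auto
  have "sum (Fw R g s) R = sum (\<lambda>x. s (g x)) R" unfolding Fw_def by simp
  also have "... = sum s {1..n}" using sum.reindex_bij_betw[OF gb] .
  finally show ?thesis .
qed

lemma card_ppN:
  "card {f \<in> pp R le w. sum f R = N} =
    (\<Sum>g\<in>lin_exts R le. card {s \<in> Seq n (descset R w g). sum s {1..n} = N})"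
  using card_pp_gen[of "\<lambda>_. True" "\<lambda>_. True" N] sum_Fw by simp

lemma card_ppZ:
  assumes n1: "1 \<le> n"
  shows "card {f \<in> pp R le w. sum f R = N \<and> (\<exists>x\<in>R. f x = 0)} =
    (\<Sum>g\<in>lin_exts R le. card {s \<in> Seq n (descset R w g). sum s {1..n} = N \<and> s n = 0})"
proof (rule card_pp_gen[OF sum_Fw])
  fix g s assume g: "g \<in> lin_exts R le" and s: "s \<in> Seq n (descset R w g)"
  have gb: "bij_betw g R {1..n}" using g unfolding lin_exts_def by auto
  note bf = bij_facts[OF gb]
  show "(\<exists>x\<in>R. Fw R g s x = 0) \<longleftrightarrow> s n = 0"
  proof
    assume "\<exists>x\<in>R. Fw R g s x = 0"
    then obtain x where x: "x \<in> R" "s (g x) = 0" unfolding Fw_def by auto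
    have "s n \<le> s (g x)" using seq_mono[OF s] bf(4)[OF x(1)] by auto
    then show "s n = 0" using x by simp
  next
    assume "s n = 0"
    moreover have "n \<in> {1..n}" using n1 by auto
    ultimately show "\<exists>x\<in>R. Fw R g s x = 0"
      using bf(2,3) unfolding Fw_def by (metis)
  qed
qed

end

lemma SeqN_zero:
  assumes D: "D \<subseteq> {1..m}"
  shows "{s \<in> Seq (Suc m) D. sum s {1..Suc m} = N \<and> s (Suc m) = 0} =
         {s \<in> Seq m D. sum s {1..m} = N \<and> True}"
proof (rule set_eqI, rule iffI)
  fix s assume s: "s \<in> {s \<in> Seq (Suc m) D. sum s {1..Suc m} = N \<and> s (Suc m) = 0}"
  have z: "\<forall>i. i \<notin> {1..m} \<longrightarrow> s i = 0"
  proof (intro allI impI)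
    fix i assume "i \<notin> {1..m}"
    then have "i \<notin> {1..Suc m} \<or> i = Suc m" by auto
    then show "s i = 0" using s unfolding Seq_def by auto
  qed
  have c: "\<forall>i\<in>{1..m}. s (Suc i) + (if i \<in> D then 1 else 0) \<le> s i"
    using s unfolding Seq_def by auto
  have "sum s {1..Suc m} = sum s {1..m}" using s by simp
  then show "s \<in> {s \<in> Seq m D. sum s {1..m} = N \<and> True}"
    using z c s unfolding Seq_def by auto
next
  fix s assume s: "s \<in> {s \<in> Seq m D. sum s {1..m} = N \<and> True}"
  have z: "\<forall>i. i \<notin> {1..m} \<longrightarrow> s i = 0" using s unfolding Seq_def by auto
  have sm: "s (Suc m) = 0" "s (Suc (Suc m)) = 0" using z by auto
  have c: "\<forall>i\<in>{1..Suc m}. s (Suc i) + (if i \<in> D then 1 else 0) \<le> s i"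
  proof
    fix i assume i: "i \<in> {1..Suc m}"
    show "s (Suc i) + (if i \<in> D then 1 else 0) \<le> s i"
    proof (cases "i = Suc m")
      case True
      then show ?thesis using sm D by auto
    next
      case False
      then show ?thesis using s i unfolding Seq_def by auto
    qed
  qed
  have "sum s {1..Suc m} = sum s {1..m}" using sm by simp
  then show "s \<in> {s \<in> Seq (Suc m) D. sum s {1..Suc m} = N \<and> s (Suc m) = 0}"
    using z c s sm unfolding Seq_def by auto
qed

definition Wc :: "nat \<Rightarrow> nat \<Rightarrow> nat" where
  "Wc m M = card {s \<in> Seq m {}. sum s {1..m} = M}"

lemma Wc_0: "Wc m 0 = 1"
proof -
  have "{s \<in> Seq m {}. sum s {1..m} = 0} = {\<lambda>_. 0}"
  proof (rule set_eqI, rule iffI)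
    fix s assume s: "s \<in> {s \<in> Seq m {}. sum s {1..m} = 0}"
    have "s i = 0" for i
    proof (cases "i \<in> {1..m}")
      case True then show ?thesis using s by simp
    next
      case False then show ?thesis using s unfolding Seq_def by auto
    qed
    then show "s \<in> {\<lambda>_. 0}" by auto
  qed (auto simp: Seq_def)
  then show ?thesis unfolding Wc_def by simp
qed

lemma card_filter_sum: "finite A \<Longrightarrow> card {x\<in>A. P x} = (\<Sum>x\<in>A. if P x then 1 else 0)"
  by (simp add: sum.inter_filter[symmetric])

lemma SeqN_shift:
  assumes D: "D \<subseteq> {1..m}"
  shows "card {s \<in> Seq m D. sum s {1..m} = N \<and> True} =
         (if (\<Sum>j\<in>D. j) \<le> N then Wc m (N - (\<Sum>j\<in>D. j)) else 0)"
proof -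
  have finD: "finite D" using D finite_subset by blast
  define t where "t = (\<lambda>i. if 1 \<le> i then card {j\<in>D. i \<le> j} else 0)"
  have t1: "t i = 0" if "i \<notin> {1..m}" for i
  proof (cases "1 \<le> i")
    case True
    then have "m < i" using that by auto
    then have e: "{j\<in>D. i \<le> j} = {}" using D by auto
    show ?thesis unfolding t_def using True e by (simp only: if_True card.empty)
  qed (simp add: t_def)
  have t2: "t i = t (Suc i) + (if i \<in> D then 1 else 0)" if "1 \<le> i" for i
  proof -
    have "{j\<in>D. i \<le> j} = {j\<in>D. Suc i \<le> j} \<union> (if i \<in> D then {i} else {})"
      by (auto simp: Suc_le_eq nat_less_le)
    moreover have "card ({j\<in>D. Suc i \<le> j} \<union> (if i \<in> D then {i} else {})) =
        card {j\<in>D. Suc i \<le> j} + (if i \<in> D then 1 else 0)"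
      using finD by (auto simp: card_insert_if)
    ultimately show ?thesis unfolding t_def using that by simp
  qed
  have t3: "sum t {1..m} = (\<Sum>j\<in>D. j)"
  proof -
    have "sum t {1..m} = (\<Sum>i\<in>{1..m}. \<Sum>j\<in>D. if i \<le> j then 1 else 0)"
      unfolding t_def using finD by (intro sum.cong refl) (simp add: card_filter_sum)
    also have "... = (\<Sum>j\<in>D. \<Sum>i\<in>{1..m}. if i \<le> j then 1 else 0)" by (rule sum.swap)
    also have "... = (\<Sum>j\<in>D. j)"
    proof (intro sum.cong refl)
      fix j assume "j \<in> D"
      then have "j \<le> m" using D by auto
      then have "{i\<in>{1..m}. i \<le> j} = {1..j}" by auto
      then show "(\<Sum>i\<in>{1..m}. if i \<le> j then 1 else 0) = j"
        using card_filter_sum[of "{1..m}" "\<lambda>i. i \<le> j"] by simp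
    qed
    finally show ?thesis .
  qed
  have t4: "t i \<le> s i" if s: "s \<in> Seq m D" for s i
  proof (cases "1 \<le> i \<and> i \<le> Suc m")
    case False
    then show ?thesis using t1 by auto
  next
    case True
    have "i \<le> Suc m" using True by simp
    then show ?thesis
    proof (induction i rule: inc_induct)
      case base then show ?case using t1[of "Suc m"] by simp
    next
      case (step k)
      show ?case
      proof (cases "k = 0")
        case True then show ?thesis by (simp add: t_def)
      next
        case False
        then have k: "k \<in> {1..m}" using step by auto
        then have "s (Suc k) + (if k \<in> D then 1 else 0) \<le> s k" using s unfolding Seq_def by auto
        moreover have "t k = t (Suc k) + (if k \<in> D then 1 else 0)" using t2[of k] k by simp
        ultimately show ?thesis using step.IH by (cases "k \<in> D") simp_all
      qed
    qed
  qed
  show ?thesis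
  proof (cases "(\<Sum>j\<in>D. j) \<le> N")
    case False
    have "{s \<in> Seq m D. sum s {1..m} = N \<and> True} = {}"
    proof (rule ccontr)
      assume "{s \<in> Seq m D. sum s {1..m} = N \<and> True} \<noteq> {}"
      then obtain s where s: "s \<in> Seq m D" "sum s {1..m} = N" by auto
      have "sum t {1..m} \<le> sum s {1..m}" using t4[OF s(1)] by (intro sum_mono) auto
      then show False using s t3 False by simp
    qed
    then have "card {s \<in> Seq m D. sum s {1..m} = N \<and> True} = 0" by (simp only: card.empty)
    then show ?thesis using False by simp
  next
    case True
    let ?A = "{s \<in> Seq m D. sum s {1..m} = N \<and> True}"
    let ?B = "{s \<in> Seq m {}. sum s {1..m} = N - (\<Sum>j\<in>D. j)}"
    have "bij_betw (\<lambda>s i. s i - t i) ?A ?B"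
    proof (rule bij_betw_byWitness[where f' = "\<lambda>s i. s i + t i"])
      show "\<forall>a\<in>?A. (\<lambda>i. (a i - t i) + t i) = a"
      proof
        fix a assume "a \<in> ?A"
        then have "a \<in> Seq m D" by simp
        then have "\<And>i. t i \<le> a i" using t4 by blast
        then show "(\<lambda>i. (a i - t i) + t i) = a" by (simp add: fun_eq_iff)
      qed
      show "\<forall>a\<in>?B. (\<lambda>i. (a i + t i) - t i) = a" by simp
      show "(\<lambda>s i. s i - t i) ` ?A \<subseteq> ?B"
      proof
        fix x assume "x \<in> (\<lambda>s i. s i - t i) ` ?A"
        then obtain s where s: "s \<in> ?A" and x: "x = (\<lambda>i. s i - t i)" by auto
        have sS: "s \<in> Seq m D" using s by simp
        have "sum x {1..m} = sum s {1..m} - sum t {1..m}"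
          unfolding x using t4[OF sS] by (intro sum_subtractf_nat) auto
        then have sx: "sum x {1..m} = N - (\<Sum>j\<in>D. j)" using s t3 by simp
        have "x \<in> Seq m {}"
          unfolding Seq_def
        proof (intro CollectI conjI allI impI ballI)
          fix i assume "i \<notin> {1..m}"
          then show "x i = 0" using sS unfolding x Seq_def by auto
        next
          fix i assume i: "i \<in> {1..m}"
          have "s (Suc i) + (if i \<in> D then 1 else 0) \<le> s i" using sS i unfolding Seq_def by auto
          moreover have "t i = t (Suc i) + (if i \<in> D then 1 else 0)" using t2[of i] i by auto
          moreover have "t (Suc i) \<le> s (Suc i)" using t4[OF sS] .
          ultimately show "x (Suc i) + (if i \<in> {} then 1 else 0) \<le> x i" unfolding x
            by (cases "i \<in> D") simp_all
        qed
        then show "x \<in> ?B" using sx by simp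
      qed
      show "(\<lambda>s i. s i + t i) ` ?B \<subseteq> ?A"
      proof
        fix x assume "x \<in> (\<lambda>s i. s i + t i) ` ?B"
        then obtain s where s: "s \<in> ?B" and x: "x = (\<lambda>i. s i + t i)" by auto
        have sS: "s \<in> Seq m {}" using s by simp
        have "sum x {1..m} = sum s {1..m} + sum t {1..m}" unfolding x by (simp add: sum.distrib)
        then have sx: "sum x {1..m} = N" using s t3 True by simp
        have "x \<in> Seq m D"
          unfolding Seq_def
        proof (intro CollectI conjI allI impI ballI)
          fix i assume "i \<notin> {1..m}"
          then show "x i = 0" using sS t1 unfolding x Seq_def by auto
        next
          fix i assume i: "i \<in> {1..m}"
          have "s (Suc i) \<le> s i" using sS i unfolding Seq_def by auto
          moreover have "t i = t (Suc i) + (if i \<in> D then 1 else 0)" using t2[of i] i by auto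
          ultimately show "x (Suc i) + (if i \<in> D then 1 else 0) \<le> x i" unfolding x
            by (cases "i \<in> D") simp_all
        qed
        then show "x \<in> ?A" using sx by simp
      qed
    qed
    then have "card ?A = card ?B" by (rule bij_betw_same_card)
    then show ?thesis using True unfolding Wc_def by simp
  qed
qed

lemma cancel_lemma:
  fixes \<alpha> :: "'x \<Rightarrow> nat" and \<beta> :: "'y \<Rightarrow> nat" and V :: "nat \<Rightarrow> nat"
  assumes X: "finite X" and Y: "finite Y" and V0: "V 0 = 1"
    and eq: "\<And>N. (\<Sum>x\<in>X. if \<alpha> x \<le> N then V (N - \<alpha> x) else 0) =
                  (\<Sum>y\<in>Y. if \<beta> y \<le> N then V (N - \<beta> y) else 0)"
  shows "card {x\<in>X. \<alpha> x = k} = card {y\<in>Y. \<beta> y = k}"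
proof -
  have grp: "(\<Sum>x\<in>Z. if \<gamma> x \<le> N then V (N - \<gamma> x) else 0) =
      (\<Sum>k\<in>{..N}. card {x\<in>Z. \<gamma> x = k} * V (N - k))" if Z: "finite Z" for Z :: "'z set" and \<gamma> N
  proof -
    have "(\<Sum>x\<in>Z. if \<gamma> x \<le> N then V (N - \<gamma> x) else 0) = (\<Sum>x\<in>{x\<in>Z. \<gamma> x \<le> N}. V (N - \<gamma> x))"
      using Z by (simp add: sum.inter_filter)
    also have "... = (\<Sum>k\<in>{..N}. \<Sum>x\<in>{x\<in>{x\<in>Z. \<gamma> x \<le> N}. \<gamma> x = k}. V (N - \<gamma> x))"
      using Z by (intro sum.group[symmetric]) auto
    also have "... = (\<Sum>k\<in>{..N}. card {x\<in>Z. \<gamma> x = k} * V (N - k))"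
    proof (intro sum.cong refl)
      fix k assume k: "k \<in> {..N}"
      have "{x\<in>{x\<in>Z. \<gamma> x \<le> N}. \<gamma> x = k} = {x\<in>Z. \<gamma> x = k}" using k by auto
      then show "(\<Sum>x\<in>{x\<in>{x\<in>Z. \<gamma> x \<le> N}. \<gamma> x = k}. V (N - \<gamma> x)) = card {x\<in>Z. \<gamma> x = k} * V (N - k)"
        by simp
    qed
    finally show ?thesis .
  qed
  define a where "a k = card {x\<in>X. \<alpha> x = k}" for k
  define b where "b k = card {y\<in>Y. \<beta> y = k}" for k
  have E: "(\<Sum>k\<in>{..N}. a k * V (N - k)) = (\<Sum>k\<in>{..N}. b k * V (N - k))" for N
    using eq[of N] grp[OF X, of \<alpha> N] grp[OF Y, of \<beta> N] unfolding a_def b_def by simp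
  have "\<forall>k\<le>N. a k = b k" for N
  proof (induction N rule: less_induct)
    case (less N)
    have IH: "a k = b k" if "k < N" for k using less that by auto
    have s1: "(\<Sum>k\<in>{..<N}. a k * V (N - k)) = (\<Sum>k\<in>{..<N}. b k * V (N - k))"
      using IH by (intro sum.cong) auto
    have "a N + (\<Sum>k\<in>{..<N}. a k * V (N - k)) = b N + (\<Sum>k\<in>{..<N}. b k * V (N - k))"
      using E[of N] V0 by (simp add: lessThan_Suc_atMost[symmetric])
    then have "a N = b N" using s1 by simp
    then show ?case using IH by (auto simp: le_less)
  qed
  then show ?thesis unfolding a_def b_def by auto
qed

lemma sum_by_card:
  fixes \<alpha> :: "'x \<Rightarrow> nat" and \<beta> :: "'y \<Rightarrow> nat" and h :: "nat \<Rightarrow> 'c::comm_semiring_1"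
  assumes X: "finite X" and Y: "finite Y"
    and c: "\<And>k. card {x\<in>X. \<alpha> x = k} = card {y\<in>Y. \<beta> y = k}"
  shows "(\<Sum>x\<in>X. h (\<alpha> x)) = (\<Sum>y\<in>Y. h (\<beta> y))"
proof -
  let ?T = "\<alpha> ` X \<union> \<beta> ` Y"
  have fT: "finite ?T" using X Y by simp
  have "(\<Sum>x\<in>X. h (\<alpha> x)) = (\<Sum>k\<in>?T. \<Sum>x\<in>{x\<in>X. \<alpha> x = k}. h (\<alpha> x))"
    using X fT by (intro sum.group[symmetric]) auto
  also have "... = (\<Sum>k\<in>?T. of_nat (card {x\<in>X. \<alpha> x = k}) * h k)" by simp
  also have "... = (\<Sum>k\<in>?T. of_nat (card {y\<in>Y. \<beta> y = k}) * h k)" using c by simp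
  also have "... = (\<Sum>k\<in>?T. \<Sum>y\<in>{y\<in>Y. \<beta> y = k}. h (\<beta> y))" by simp
  also have "... = (\<Sum>y\<in>Y. h (\<beta> y))"
    using Y fT by (intro sum.group) auto
  finally show ?thesis .
qed


lemma diagram_iff: "(i, j) \<in> diagram la \<longleftrightarrow> 1 \<le> i \<and> i \<le> length la \<and> 1 \<le> j \<and> j \<le> la ! (i - 1)"
  unfolding diagram_def by simp

lemma diag_down:
  assumes la: "is_partition la" and ij: "(i, j) \<in> diagram la"
    and "1 \<le> i'" "i' \<le> i" "1 \<le> j'" "j' \<le> j"
  shows "(i', j') \<in> diagram la"
proof -
  have ij': "1 \<le> i" "i \<le> length la" "j \<le> la ! (i - 1)" using ij unfolding diagram_iff by auto
  have "la ! (i - 1) \<le> la ! (i' - 1)"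
  proof (cases "i' = i")
    case False
    then have "i' - 1 < i - 1" "i - 1 < length la" using assms ij' by auto
    moreover have "sorted_wrt (\<ge>) la" using la unfolding is_partition_def by simp
    ultimately show ?thesis using sorted_wrt_nth_less[of "(\<ge>)" la "i' - 1" "i - 1"] by simp
  qed simp
  then show ?thesis using assms ij' unfolding diagram_iff by auto
qed

lemma add_corner:
  assumes mu: "is_partition mu" and nin: "(i, j) \<notin> diagram mu" and i1: "1 \<le> i" and j1: "1 \<le> j"
    and up: "i = 1 \<or> (i - 1, j) \<in> diagram mu" and left: "j = 1 \<or> (i, j - 1) \<in> diagram mu"
  shows "\<exists>nu. is_partition nu \<and> diagram nu = insert (i, j) (diagram mu)"
proof (cases "i \<le> length mu")
  case True
  have srt: "sorted_wrt (\<ge>) mu" and nz: "0 \<notin> set mu" using mu unfolding is_partition_def by auto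
  have pos: "mu ! (i - 1) \<ge> 1"
  proof -
    have "mu ! (i - 1) \<in> set mu" using True i1 by auto
    then have "mu ! (i - 1) \<noteq> 0" using nz by metis
    then show ?thesis by simp
  qed
  have j2: "j \<ge> 2"
  proof (rule ccontr)
    assume "\<not> j \<ge> 2"
    then have "j = 1" using j1 by auto
    then have "(i, j) \<in> diagram mu" using True i1 pos unfolding diagram_iff by auto
    then show False using nin by simp
  qed
  have "(i, j - 1) \<in> diagram mu" using left j2 by auto
  then have a: "j - 1 \<le> mu ! (i - 1)" unfolding diagram_iff by auto
  have b: "mu ! (i - 1) < j" using nin True i1 j1 unfolding diagram_iff by auto
  have mi: "mu ! (i - 1) = j - 1" using a b by auto
  define nu where "nu = mu[i - 1 := j]"
  have len: "length nu = length mu" unfolding nu_def by simp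
  have nth_nu: "nu ! k = (if k = i - 1 then j else mu ! k)" if "k < length mu" for k
    unfolding nu_def using that by simp
  have srt_nu: "sorted_wrt (\<ge>) nu"
    unfolding sorted_wrt_iff_nth_less
  proof (intro allI impI)
    fix a b assume ab: "a < b" "b < length nu"
    have mab: "mu ! b \<le> mu ! a" using sorted_wrt_nth_less[OF srt, of a b] ab len by simp
    show "nu ! b \<le> nu ! a"
    proof (cases "a = i - 1")
      case True
      then have "mu ! b \<le> mu ! (i - 1)" using mab by simp
      then show ?thesis using nth_nu ab len True mi j2 by auto
    next
      case False
      note aF = False
      show ?thesis
      proof (cases "b = i - 1")
        case True
        then have i2: "i \<ge> 2" using ab by auto
        then have "(i - 1, j) \<in> diagram mu" using up by auto
        then have "j \<le> mu ! (i - 1 - 1)" unfolding diagram_iff by auto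
        moreover have "mu ! (i - 1 - 1) \<le> mu ! a"
        proof (cases "a = i - 1 - 1")
          case False
          then have "a < i - 1 - 1" using ab True by auto
          then show ?thesis using sorted_wrt_nth_less[OF srt, of a "i - 1 - 1"] True ab len by simp
        qed simp
        ultimately show ?thesis using nth_nu ab len True aF by auto
      next
        case False
        then show ?thesis using nth_nu ab len aF mab by auto
      qed
    qed
  qed
  have nz_nu: "0 \<notin> set nu"
  proof
    assume "0 \<in> set nu"
    then have "0 \<in> insert j (set mu)" using set_update_subset_insert unfolding nu_def by fast
    then show False using nz j1 by auto
  qed
  have "diagram nu = insert (i, j) (diagram mu)"
  proof (rule set_eqI)
    fix x :: "nat \<times> nat"
    obtain a b where x: "x = (a, b)" by (cases x)
    show "x \<in> diagram nu \<longleftrightarrow> x \<in> insert (i, j) (diagram mu)"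
    proof (cases "a = i")
      case True
      then show ?thesis unfolding x diagram_iff using len nth_nu[of "i - 1"] mi True i1 j2 \<open>i \<le> length mu\<close>
        by (auto simp: diagram_iff)
    next
      case False
      have "a \<ge> 1 \<Longrightarrow> a \<le> length mu \<Longrightarrow> nu ! (a - 1) = mu ! (a - 1)"
        using nth_nu[of "a - 1"] False i1 by auto
      then show ?thesis unfolding x diagram_iff using len False by (auto simp: diagram_iff)
    qed
  qed
  then show ?thesis using srt_nu nz_nu unfolding is_partition_def by blast
next
  case False
  have srt: "sorted_wrt (\<ge>) mu" and nz: "0 \<notin> set mu" using mu unfolding is_partition_def by auto
  have j: "j = 1"
  proof (rule ccontr)
    assume "j \<noteq> 1"
    then have "(i, j - 1) \<in> diagram mu" using left by auto
    then show False using False unfolding diagram_iff by auto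
  qed
  have il: "i = Suc (length mu)"
  proof (cases "i = 1")
    case True
    then have "length mu = 0" using False by (cases mu) auto
    then show ?thesis using True by simp
  next
    case F: False
    then have "(i - 1, j) \<in> diagram mu" using up by auto
    then show ?thesis using False unfolding diagram_iff by auto
  qed
  define nu where "nu = mu @ [1]"
  have srt_nu: "sorted_wrt (\<ge>) nu" unfolding nu_def sorted_wrt_append
  proof (intro conjI ballI)
    fix x y assume "x \<in> set mu" "y \<in> set [1::nat]"
    moreover have "x \<noteq> 0" using nz \<open>x \<in> set mu\<close> by metis
    ultimately show "y \<le> x" by simp
  qed (use srt in auto)
  have nz_nu: "0 \<notin> set nu" using nz unfolding nu_def by auto
  have "diagram nu = insert (i, j) (diagram mu)"
  proof (rule set_eqI)
    fix x :: "nat \<times> nat"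
    obtain a b where x: "x = (a, b)" by (cases x)
    show "x \<in> diagram nu \<longleftrightarrow> x \<in> insert (i, j) (diagram mu)"
    proof (cases "a = i")
      case True
      then show ?thesis unfolding x diagram_iff nu_def using il j by (auto simp: nth_append diagram_iff)
    next
      case False
      then show ?thesis unfolding x diagram_iff nu_def using il by (auto simp: nth_append diagram_iff)
    qed
  qed
  then show ?thesis using srt_nu nz_nu unfolding is_partition_def by blast
qed


locale bstrip =
  fixes la mu :: "nat list"
  assumes strip: "border_strip la mu"
begin

abbreviation "S \<equiv> skew la mu"

lemma la_part: "is_partition la" and mu_part: "is_partition mu"
  and S_ne: "S \<noteq> {}"
  and no_sq: "\<not> {(i, j), (i + 1, j), (i, j + 1), (i + 1, j + 1)} \<subseteq> S"
  using strip unfolding border_strip_def by auto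

lemma S_iff: "c \<in> S \<longleftrightarrow> c \<in> diagram la \<and> c \<notin> diagram mu"
  unfolding skew_def by auto

lemma S_pos: "c \<in> S \<Longrightarrow> 1 \<le> fst c \<and> 1 \<le> snd c"
  unfolding S_iff by (cases c) (auto simp: diagram_iff)

lemma finite_diagram: "finite (diagram l)"
proof -
  have "diagram l \<subseteq> {1..length l} \<times> {1..Max (insert 0 (set l))}"
  proof
    fix c assume c: "c \<in> diagram l"
    obtain i j where ij: "c = (i, j)" by (cases c)
    have h: "1 \<le> i" "i \<le> length l" "1 \<le> j" "j \<le> l ! (i - 1)" using c ij diagram_iff by auto
    then have "l ! (i - 1) \<in> set l" by auto
    then have "l ! (i - 1) \<le> Max (insert 0 (set l))" by simp
    then have "j \<le> Max (insert 0 (set l))" using h(4) by linarith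
    then show "c \<in> {1..length l} \<times> {1..Max (insert 0 (set l))}" using h ij by auto
  qed
  then show ?thesis by (rule finite_subset) simp
qed

lemma finite_S: "finite S"
  unfolding skew_def using finite_diagram by simp

lemma conv:
  assumes c: "c \<in> S" and d: "d \<in> S"
    and "fst d \<le> a" "a \<le> fst c" "snd d \<le> b" "b \<le> snd c"
  shows "(a, b) \<in> S"
proof -
  have dp: "1 \<le> fst d" "1 \<le> snd d" using S_pos[OF d] by auto
  have "(a, b) \<in> diagram la"
    using diag_down[OF la_part, of "fst c" "snd c" a b] c assms dp unfolding S_iff by auto
  moreover have "(a, b) \<notin> diagram mu"
  proof
    assume "(a, b) \<in> diagram mu"
    then have "(fst d, snd d) \<in> diagram mu"
      using diag_down[OF mu_part, of a b "fst d" "snd d"] assms dp by auto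
    then show False using d unfolding S_iff by simp
  qed
  ultimately show ?thesis unfolding S_iff by simp
qed

lemma no_strict:
  assumes c: "c \<in> S" and d: "d \<in> S" and "fst d < fst c" "snd d < snd c"
  shows False
proof -
  obtain i j where dij: "d = (i, j)" by (cases d)
  have "(i, j) \<in> S" "(i + 1, j) \<in> S" "(i, j + 1) \<in> S" "(i + 1, j + 1) \<in> S"
    using conv[OF c d] assms dij by auto
  then show False using no_sq[of i j] by auto
qed

lemma content_inj:
  assumes c: "c \<in> S" and d: "d \<in> S" and e: "content c = content d"
  shows "c = d"
proof -
  have e': "int (snd c) - int (fst c) = int (snd d) - int (fst d)" using e unfolding content_def .
  consider "fst c = fst d" | "fst c < fst d" | "fst d < fst c" by linarith
  then show ?thesis
  proof cases
    case 1 then have "snd c = snd d" using e' by simp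
    then show ?thesis using 1 by (simp add: prod_eq_iff)
  next
    case 2 then have "snd c < snd d" using e' by simp
    then show ?thesis using no_strict[OF d c] 2 by simp
  next
    case 3 then have "snd d < snd c" using e' by simp
    then show ?thesis using no_strict[OF c d] 3 by simp
  qed
qed

lemma line:
  assumes c: "c \<in> S" and d: "d \<in> S" and le: "bs_le c d"
  shows "fst c = fst d \<or> snd c = snd d"
proof (rule ccontr)
  assume "\<not> (fst c = fst d \<or> snd c = snd d)"
  then have "fst d < fst c" "snd d < snd c" using le unfolding bs_le_def by auto
  then show False using no_strict[OF c d] by blast
qed

lemma ic_S: "u \<in> inner_corners la mu \<Longrightarrow> u \<in> S"
  unfolding inner_corners_def by simp

lemma ic_max:
  assumes u: "u \<in> inner_corners la mu" and c: "c \<in> S" and le: "bs_le u c"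
  shows "c = u"
proof -
  obtain nu where nu: "is_partition nu" "diagram nu = insert u (diagram mu)"
    using u unfolding inner_corners_def by auto
  have "u \<in> diagram nu" using nu by simp
  then have "(fst c, snd c) \<in> diagram nu"
    using diag_down[OF nu(1), of "fst u" "snd u" "fst c" "snd c"] S_pos[OF c] le
    unfolding bs_le_def by auto
  then have "c = u \<or> c \<in> diagram mu" using nu by auto
  then show ?thesis using c unfolding S_iff by auto
qed

lemma ic_exists:
  assumes c: "c \<in> S"
  shows "\<exists>u\<in>inner_corners la mu. bs_le c u"
proof -
  have "\<exists>d. (d \<in> S \<and> bs_le c d) \<and> (\<forall>d'. d' \<in> S \<and> bs_le c d' \<longrightarrow> fst d + snd d \<le> fst d' + snd d')"
    using ex_has_least_nat[of "\<lambda>d. d \<in> S \<and> bs_le c d" c "\<lambda>d. fst d + snd d"] c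
    unfolding bs_le_def by auto
  then obtain d where d: "d \<in> S" "bs_le c d"
    and dmin: "\<And>d'. d' \<in> S \<Longrightarrow> bs_le c d' \<Longrightarrow> fst d + snd d \<le> fst d' + snd d'" by blast
  obtain i j where dij: "d = (i, j)" by (cases d)
  have ij1: "1 \<le> i" "1 \<le> j" using S_pos[OF d(1)] dij by auto
  have dla: "(i, j) \<in> diagram la" "(i, j) \<notin> diagram mu" using d dij unfolding S_iff by auto
  have up: "i = 1 \<or> (i - 1, j) \<in> diagram mu"
  proof (rule ccontr)
    assume a: "\<not> (i = 1 \<or> (i - 1, j) \<in> diagram mu)"
    then have "(i - 1, j) \<in> diagram la" using diag_down[OF la_part dla(1), of "i - 1" j] ij1 by auto
    then have "(i - 1, j) \<in> S" using a unfolding S_iff by simp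
    moreover have "bs_le c (i - 1, j)" using d(2) dij unfolding bs_le_def by auto
    ultimately have "fst d + snd d \<le> (i - 1) + j" using dmin by fastforce
    then show False using dij a ij1 by auto
  qed
  have left: "j = 1 \<or> (i, j - 1) \<in> diagram mu"
  proof (rule ccontr)
    assume a: "\<not> (j = 1 \<or> (i, j - 1) \<in> diagram mu)"
    then have "(i, j - 1) \<in> diagram la" using diag_down[OF la_part dla(1), of i "j - 1"] ij1 by auto
    then have "(i, j - 1) \<in> S" using a unfolding S_iff by simp
    moreover have "bs_le c (i, j - 1)" using d(2) dij unfolding bs_le_def by auto
    ultimately have "fst d + snd d \<le> i + (j - 1)" using dmin by fastforce
    then show False using dij a ij1 by auto
  qed
  obtain nu where "is_partition nu" "diagram nu = insert (i, j) (diagram mu)"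
    using add_corner[OF mu_part dla(2) ij1 up left] by blast
  then have "d \<in> inner_corners la mu" unfolding inner_corners_def using d dij by auto
  then show ?thesis using d(2) by blast
qed

lemma sep:
  assumes u: "u \<in> inner_corners la mu" and a: "a \<in> S" and b: "b \<in> S"
    and ca: "content a < content u" and cb: "content u < content b"
  shows "\<not> bs_le a b \<and> \<not> bs_le b a"
proof (intro conjI notI)
  have uS: "u \<in> S" using ic_S[OF u] .
  have pa: "1 \<le> fst a" "1 \<le> snd a" and pb: "1 \<le> fst b" "1 \<le> snd b" using S_pos a b by auto
  {
    assume le: "bs_le b a"
    then have le': "fst a \<le> fst b" "snd a \<le> snd b" unfolding bs_le_def by auto
    from line[OF b a le] show False
    proof
      assume "snd b = snd a"
      then show False using ca cb le' unfolding content_def by linarith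
    next
      assume fe: "fst b = fst a"
      define s where "s = nat (int (fst a) + content u)"
      have s1: "int s = int (fst a) + content u" "snd a \<le> s" "s \<le> snd b"
        using ca cb fe pa unfolding s_def content_def by auto
      have xS: "(fst a, s) \<in> S" using conv[OF b a] fe s1 by auto
      have "content (fst a, s) = content u" using s1 unfolding content_def by simp
      then have xu: "(fst a, s) = u" using content_inj[OF xS uS] by simp
      have "bs_le u a" using xu[symmetric] s1 unfolding bs_le_def by auto
      then have "a = u" using ic_max[OF u a] by simp
      then show False using ca by simp
    qed
  }
  {
    assume le: "bs_le a b"
    then have le': "fst b \<le> fst a" "snd b \<le> snd a" unfolding bs_le_def by auto
    from line[OF a b le] show False
    proof
      assume "fst a = fst b"
      then show False using ca cb le' unfolding content_def by linarith
    next
      assume se: "snd a = snd b"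
      define r where "r = nat (int (snd a) - content u)"
      have r1: "int r = int (snd a) - content u" "fst b \<le> r" "r \<le> fst a"
        using ca cb se pb unfolding r_def content_def by auto
      have xS: "(r, snd a) \<in> S" using conv[OF a b] se r1 by auto
      have "content (r, snd a) = content u" using r1 unfolding content_def by simp
      then have xu: "(r, snd a) = u" using content_inj[OF xS uS] by simp
      have "bs_le u b" using xu[symmetric] r1 se unfolding bs_le_def by auto
      then have "b = u" using ic_max[OF u b] by simp
      then show False using cb by simp
    qed
  }
qed

end

definition cellof :: "('b \<Rightarrow> nat \<times> nat) \<Rightarrow> (nat \<times> nat) + 'b \<Rightarrow> nat \<times> nat" where
  "cellof att x = (case x of Inl c \<Rightarrow> c | Inr b \<Rightarrow> att b)"

lemma cellof_simps [simp]: "cellof att (Inl c) = c" "cellof att (Inr b) = att b"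
  unfolding cellof_def by simp_all

lemma mob_le_simps [simp]:
  "mob_le hle att (Inl c) (Inl d) = bs_le c d"
  "mob_le hle att (Inr b) (Inr b') = hle b b'"
  "mob_le hle att (Inr b) (Inl c) = bs_le (att b) c"
  "mob_le hle att (Inl c) (Inr b) = False"
  unfolding mob_le_def by simp_all

lemma bs_le_refl [simp]: "bs_le c c" unfolding bs_le_def by simp
lemma bs_le_trans: "bs_le a b \<Longrightarrow> bs_le b c \<Longrightarrow> bs_le a c" unfolding bs_le_def by auto
lemma bs_le_antisym: "bs_le a b \<Longrightarrow> bs_le b a \<Longrightarrow> a = b" unfolding bs_le_def by (auto simp: prod_eq_iff)

locale mob = bstrip la mu for la mu :: "nat list" +
  fixes H :: "'b set" and hle :: "'b \<Rightarrow> 'b \<Rightarrow> bool" and att :: "'b \<Rightarrow> nat \<times> nat"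
    and \<omega> :: "(nat \<times> nat) + 'b \<Rightarrow> int"
  assumes mobile: "mobile_data (skew la mu) H hle att"
    and inj: "inj_on \<omega> (mob_carrier (skew la mu) H)"
    and rev_schur: "\<forall>c\<in>skew la mu. \<forall>d\<in>skew la mu.
                      content c < content d \<longrightarrow> \<omega> (Inl d) < \<omega> (Inl c)"
    and natural: "\<forall>x\<in>Inr ` H. \<forall>y\<in>mob_carrier (skew la mu) H.
                    covers (mob_carrier (skew la mu) H) (mob_le hle att) x y \<longrightarrow> \<omega> x < \<omega> y"
begin

abbreviation "P \<equiv> mob_carrier S H"
abbreviation "le \<equiv> mob_le hle att"
abbreviation "IC \<equiv> inner_corners la mu"

lemma finH: "finite H" and att_S: "\<And>b. b \<in> H \<Longrightarrow> att b \<in> S"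
  and att_eq: "\<And>b b'. b \<in> H \<Longrightarrow> b' \<in> H \<Longrightarrow> hle b b' \<Longrightarrow> att b = att b'"
  and hrefl: "\<And>b. b \<in> H \<Longrightarrow> hle b b"
  and hanti: "\<And>b b'. b \<in> H \<Longrightarrow> b' \<in> H \<Longrightarrow> hle b b' \<Longrightarrow> hle b' b \<Longrightarrow> b = b'"
  and htrans: "\<And>a b c. a \<in> H \<Longrightarrow> b \<in> H \<Longrightarrow> c \<in> H \<Longrightarrow> hle a b \<Longrightarrow> hle b c \<Longrightarrow> hle a c"
  using mobile unfolding mobile_data_def poset_on_def by blast+

lemma P_iff: "x \<in> P \<longleftrightarrow> (case x of Inl c \<Rightarrow> c \<in> S | Inr b \<Rightarrow> b \<in> H)"
  unfolding mob_carrier_def by (cases x) auto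

lemma finite_P: "finite P"
  unfolding mob_carrier_def using finite_S finH by simp

lemma cellof_S: "x \<in> P \<Longrightarrow> cellof att x \<in> S"
  using att_S unfolding P_iff by (cases x) auto

lemma le_cell: "x \<in> P \<Longrightarrow> le x (Inl (cellof att x))"
  by (cases x) auto

lemma le_cellof: "x \<in> P \<Longrightarrow> y \<in> P \<Longrightarrow> le x y \<Longrightarrow> bs_le (cellof att x) (cellof att y)"
  using att_eq unfolding P_iff by (cases x; cases y) auto

lemma le_Inr: "x \<in> P \<Longrightarrow> b \<in> H \<Longrightarrow> le x (Inr b) \<Longrightarrow> \<exists>b'. x = Inr b' \<and> att b' = att b"
  using att_eq unfolding P_iff by (cases x) auto

lemma natural_chain:
  assumes b: "b \<in> H" shows "\<omega> (Inr b) < \<omega> (Inl (att b))"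
  using b
proof (induction b rule: measure_induct_rule[where f = "\<lambda>b. card {v\<in>H. hle b v}"])
  case (less b)
  have bH: "b \<in> H" by fact
  have xP: "Inr b \<in> P" using bH unfolding mob_carrier_def by auto
  show ?case
  proof (cases "\<exists>b'\<in>H. hle b b' \<and> b' \<noteq> b")
    case False
    have yP: "Inl (att b) \<in> P" using att_S[OF bH] unfolding mob_carrier_def by auto
    have "covers P le (Inr b) (Inl (att b))"
      unfolding covers_def
    proof (intro conjI)
      show "Inr b \<in> P" "Inl (att b) \<in> P" "le (Inr b) (Inl (att b))" "Inr b \<noteq> Inl (att b)"
        using xP yP by auto
      show "\<not> (\<exists>z\<in>P. le (Inr b) z \<and> le z (Inl (att b)) \<and> z \<noteq> Inr b \<and> z \<noteq> Inl (att b))"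
      proof
      assume "\<exists>z\<in>P. le (Inr b) z \<and> le z (Inl (att b)) \<and> z \<noteq> Inr b \<and> z \<noteq> Inl (att b)"
      then obtain z where z: "z \<in> P" "le (Inr b) z" "le z (Inl (att b))" "z \<noteq> Inr b" "z \<noteq> Inl (att b)"
        by blast
      show False
      proof (cases z)
        case (Inl c)
        then have "bs_le (att b) c" "bs_le c (att b)" using z by auto
        then have "c = att b" using bs_le_antisym by blast
        then show False using z Inl by simp
      next
        case (Inr v)
        then have "v \<in> H" "hle b v" "v \<noteq> b" using z unfolding P_iff by auto
        then show False using False by blast
      qed
      qed
    qed
    note cv = this
    have xH: "Inr b \<in> Inr ` H" using bH by blast
    show ?thesis using natural[rule_format, OF xH yP cv] .
  next
    case True
    let ?T = "{b'\<in>H. hle b b' \<and> b' \<noteq> b}"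
    obtain b0 where b0T: "b0 \<in> ?T" using True by blast
    have "\<exists>x. x \<in> ?T \<and> (\<forall>y. y \<in> ?T \<longrightarrow> card {v\<in>H. hle v x} \<le> card {v\<in>H. hle v y})"
      using ex_has_least_nat[of "\<lambda>x. x \<in> ?T" b0 "\<lambda>x. card {v\<in>H. hle v x}"] b0T by blast
    then obtain b' where b'T: "b' \<in> ?T"
      and b'min: "\<And>y. y \<in> ?T \<Longrightarrow> card {v\<in>H. hle v b'} \<le> card {v\<in>H. hle v y}" by blast
    have b'H: "b' \<in> H" "hle b b'" "b' \<noteq> b" using b'T by auto
    have yP: "Inr b' \<in> P" using b'H unfolding mob_carrier_def by auto
    have cov: "covers P le (Inr b) (Inr b')"
      unfolding covers_def
    proof (intro conjI)
      show "Inr b \<in> P" "Inr b' \<in> P" "le (Inr b) (Inr b')" "Inr b \<noteq> Inr b'"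
        using xP yP b'H by auto
      show "\<not> (\<exists>z\<in>P. le (Inr b) z \<and> le z (Inr b') \<and> z \<noteq> Inr b \<and> z \<noteq> Inr b')"
      proof
      assume "\<exists>z\<in>P. le (Inr b) z \<and> le z (Inr b') \<and> z \<noteq> Inr b \<and> z \<noteq> Inr b'"
      then obtain z where z: "z \<in> P" "le (Inr b) z" "le z (Inr b')" "z \<noteq> Inr b" "z \<noteq> Inr b'"
        by blast
      show False
      proof (cases z)
        case (Inl c)
        then show False using z by simp
      next
        case (Inr v)
        then have v: "v \<in> H" "hle b v" "hle v b'" "v \<noteq> b" "v \<noteq> b'" using z unfolding P_iff by auto
        then have vT: "v \<in> ?T" by auto
        have sub: "{x\<in>H. hle x v} \<subseteq> {x\<in>H. hle x b'}"
        proof (rule subsetI)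
          fix x assume "x \<in> {x\<in>H. hle x v}"
          then have x: "x \<in> H" "hle x v" by auto
          show "x \<in> {x\<in>H. hle x b'}" using htrans[OF x(1) v(1) b'H(1) x(2) v(3)] x(1) by simp
        qed
        have "b' \<notin> {x\<in>H. hle x v}" using hanti[OF v(1) b'H(1) v(3)] v(5) by auto
        moreover have "b' \<in> {x\<in>H. hle x b'}" using hrefl[OF b'H(1)] b'H(1) by simp
        ultimately have "{x\<in>H. hle x v} \<subset> {x\<in>H. hle x b'}" using sub by blast
        then have "card {x\<in>H. hle x v} < card {x\<in>H. hle x b'}"
          using finH by (simp add: psubset_card_mono)
        then show False using b'min[OF vT] by simp
      qed
      qed
    qed
    have xH: "Inr b \<in> Inr ` H" using bH by blast
    have step1: "\<omega> (Inr b) < \<omega> (Inr b')" using natural[rule_format, OF xH yP cov] .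
    have sub: "{x\<in>H. hle b' x} \<subseteq> {x\<in>H. hle b x}"
    proof (rule subsetI)
      fix x assume "x \<in> {x\<in>H. hle b' x}"
      then have x: "x \<in> H" "hle b' x" by auto
      show "x \<in> {x\<in>H. hle b x}" using htrans[OF bH b'H(1) x(1) b'H(2) x(2)] x(1) by simp
    qed
    have "b \<notin> {x\<in>H. hle b' x}" using hanti[OF bH b'H(1) b'H(2)] b'H(3) by auto
    moreover have "b \<in> {x\<in>H. hle b x}" using hrefl[OF bH] bH by simp
    ultimately have "{x\<in>H. hle b' x} \<subset> {x\<in>H. hle b x}" using sub by blast
    then have "card {x\<in>H. hle b' x} < card {x\<in>H. hle b x}"
      using finH by (simp add: psubset_card_mono)
    then have "\<omega> (Inr b') < \<omega> (Inl (att b'))" using less.IH b'H(1) by simp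
    moreover have "att b' = att b" using att_eq[OF bH b'H(1) b'H(2)] by simp
    ultimately show ?thesis using step1 by simp
  qed
qed

definition Aset :: "nat \<times> nat \<Rightarrow> ((nat \<times> nat) + 'b) set" where
  "Aset u = Inl ` {c \<in> S. content c < content u} \<union> Inr ` {b \<in> H. content (att b) < content u}"

lemma A_iff: "x \<in> Aset u \<longleftrightarrow> x \<in> P \<and> content (cellof att x) < content u"
  unfolding Aset_def mob_carrier_def by (cases x) auto

lemma incomp:
  assumes u: "u \<in> IC" and x: "x \<in> Aset u" and y: "y \<in> P" "y \<noteq> Inl u" "y \<notin> Aset u"
  shows "\<not> le x y \<and> \<not> le y x"
proof -
  have xP: "x \<in> P" and cx: "content (cellof att x) < content u" using x A_iff by auto
  have cy: "content u \<le> content (cellof att y)" using y A_iff by auto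
  have uS: "u \<in> S" using ic_S[OF u] .
  have cxS: "cellof att x \<in> S" and cyS: "cellof att y \<in> S" using cellof_S xP y by auto
  show ?thesis
  proof (cases "content (cellof att y) = content u")
    case True
    then have cyu: "cellof att y = u" using content_inj[OF cyS uS] by simp
    obtain b where yb: "y = Inr b" "b \<in> H"
      using y cyu unfolding P_iff by (cases y) auto
    show ?thesis
    proof (intro conjI notI)
      assume "le x y"
      then obtain b' where "x = Inr b'" "att b' = att b" using le_Inr[OF xP yb(2)] yb by blast
      then show False using cx cyu yb by simp
    next
      assume "le y x"
      then have "bs_le u (cellof att x)" using le_cellof[OF y(1) xP] cyu by simp
      then have "cellof att x = u" using ic_max[OF u cxS] by simp
      then show False using cx by simp
    qed
  next
    case False
    then have cy': "content u < content (cellof att y)" using cy by simp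
    have "\<not> bs_le (cellof att x) (cellof att y) \<and> \<not> bs_le (cellof att y) (cellof att x)"
      using sep[OF u cxS cyS cx cy'] .
    then show ?thesis using le_cellof xP y(1) by blast
  qed
qed

lemma u_max: "u \<in> IC \<Longrightarrow> y \<in> P \<Longrightarrow> le (Inl u) y \<Longrightarrow> y = Inl u"
  using ic_max unfolding P_iff by (cases y) auto

lemma below_u:
  assumes u: "u \<in> IC" and x: "x \<in> P" "x \<noteq> Inl u" "x \<notin> Aset u" and le: "le x (Inl u)"
  shows "\<omega> x < \<omega> (Inl u)"
proof -
  have uS: "u \<in> S" using ic_S[OF u] .
  have cy: "content u \<le> content (cellof att x)" using x A_iff by auto
  show ?thesis
  proof (cases x)
    case (Inl c)
    have cS: "c \<in> S" using x Inl unfolding P_iff by simp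
    have "c \<noteq> u" using x Inl by simp
    then have "content c \<noteq> content u" using content_inj[OF cS uS] by auto
    then have "content u < content c" using cy Inl by simp
    then show ?thesis using rev_schur cS uS Inl by auto
  next
    case (Inr b)
    have bH: "b \<in> H" using x Inr unfolding P_iff by simp
    have ch: "\<omega> (Inr b) < \<omega> (Inl (att b))" using natural_chain[OF bH] .
    show ?thesis
    proof (cases "att b = u")
      case True then show ?thesis using ch Inr by simp
    next
      case False
      have aS: "att b \<in> S" using att_S[OF bH] .
      then have "content (att b) \<noteq> content u" using content_inj[OF aS uS] False by auto
      then have "content u < content (att b)" using cy Inr by simp
      then have "\<omega> (Inl (att b)) < \<omega> (Inl u)" using rev_schur aS uS by auto
      then show ?thesis using ch Inr by simp
    qed
  qed
qed

lemma ppD: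
  assumes "f \<in> pp P le \<omega>" "x \<in> P" "y \<in> P" "le x y"
  shows "f y \<le> f x" "\<omega> y < \<omega> x \<Longrightarrow> f y < f x"
  using assms unfolding pp_def by auto

lemma zero_corner:
  assumes f: "f \<in> pp P le \<omega>" and x: "x \<in> P" and fx: "f x = 0"
  shows "\<exists>v\<in>IC. f (Inl v) = 0 \<and> bs_le (cellof att x) v"
proof -
  have cS: "cellof att x \<in> S" using cellof_S[OF x] .
  obtain v where v: "v \<in> IC" "bs_le (cellof att x) v" using ic_exists[OF cS] by blast
  have vP: "Inl v \<in> P" "Inl (cellof att x) \<in> P" using ic_S[OF v(1)] cS unfolding mob_carrier_def by auto
  have "f (Inl (cellof att x)) \<le> f x" using ppD(1)[OF f x vP(2) le_cell[OF x]] .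
  moreover have "f (Inl v) \<le> f (Inl (cellof att x))" using ppD(1)[OF f vP(2) vP(1)] v(2) by simp
  ultimately show ?thesis using v fx by auto
qed

lemma A_pos:
  assumes u: "u \<in> IC" and f: "f \<in> pp P le \<omega>" and fu: "f (Inl u) = 0"
    and mn: "\<forall>v\<in>IC. content v < content u \<longrightarrow> f (Inl v) \<noteq> 0"
    and x: "x \<in> Aset u"
  shows "1 \<le> f x"
proof (rule ccontr)
  assume "\<not> 1 \<le> f x"
  then have fx: "f x = 0" by simp
  have xP: "x \<in> P" and cx: "content (cellof att x) < content u" using x A_iff by auto
  let ?a = "cellof att x"
  have aS: "?a \<in> S" using cellof_S[OF xP] .
  have uS: "u \<in> S" using ic_S[OF u] .
  obtain v where v: "v \<in> IC" "f (Inl v) = 0" "bs_le ?a v" using zero_corner[OF f xP fx] by blast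
  have vS: "v \<in> S" using ic_S[OF v(1)] .
  consider "content v < content u" | "v = u" | "content u < content v"
    using content_inj[OF vS uS] by fastforce
  then show False
  proof cases
    case 1 then show False using mn v by auto
  next
    case 2
    have aP: "Inl ?a \<in> P" and uP: "Inl u \<in> P" using aS uS unfolding mob_carrier_def by auto
    have "\<omega> (Inl u) < \<omega> (Inl ?a)" using rev_schur aS uS cx by auto
    then have "f (Inl u) < f (Inl ?a)" using ppD(2)[OF f aP uP] v(3) 2 by simp
    moreover have "f (Inl ?a) \<le> f x" using ppD(1)[OF f xP aP le_cell[OF xP]] .
    ultimately show False using fx by simp
  next
    case 3
    then show False using sep[OF u aS vS cx] v(3) by blast
  qed
qed

end

context mob begin

definition Phi :: "nat \<times> nat \<Rightarrow> ((nat \<times> nat) + 'b \<Rightarrow> nat) \<Rightarrow> (nat \<times> nat) + 'b \<Rightarrow> nat" where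
  "Phi u f = (\<lambda>x. if x \<in> P - {Inl u} then (if x \<in> Aset u then f x + 1 else f x) else 0)"

definition Psi :: "nat \<times> nat \<Rightarrow> ((nat \<times> nat) + 'b \<Rightarrow> nat) \<Rightarrow> (nat \<times> nat) + 'b \<Rightarrow> nat" where
  "Psi u f = (\<lambda>x. if x \<in> P - {Inl u} then (if x \<in> Aset u then f x - 1 else f x) else 0)"

definition piece :: "nat \<times> nat \<Rightarrow> nat \<Rightarrow> ((nat \<times> nat) + 'b \<Rightarrow> nat) set" where
  "piece u N = {f \<in> pp P le \<omega>. sum f P = N \<and> (\<exists>x\<in>P. f x = 0) \<and> f (Inl u) = 0 \<and>
      (\<forall>v\<in>IC. content v < content u \<longrightarrow> f (Inl v) \<noteq> 0)}"

definition Tset :: "nat \<times> nat \<Rightarrow> nat \<Rightarrow> ((nat \<times> nat) + 'b \<Rightarrow> nat) set" where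
  "Tset u N = {f \<in> pp (P - {Inl u}) le \<omega>. sum f (P - {Inl u}) + card (Aset u) = N}"

lemma A_sub: "Aset u \<subseteq> P - {Inl u}"
proof
  fix x assume "x \<in> Aset u"
  then have x: "x \<in> P" "content (cellof att x) < content u" using A_iff by auto
  then have "x \<noteq> Inl u" by auto
  then show "x \<in> P - {Inl u}" using x by simp
qed

lemma finite_A: "finite (Aset u)"
  using A_sub finite_P finite_subset by blast

lemma uP: "u \<in> IC \<Longrightarrow> Inl u \<in> P"
  using ic_S unfolding mob_carrier_def by auto

lemma sum_ind: "(\<Sum>x\<in>P - {Inl u}. if x \<in> Aset u then 1 else 0) = card (Aset u)"
proof -
  have "card {x\<in>P - {Inl u}. x \<in> Aset u} = (\<Sum>x\<in>P - {Inl u}. if x \<in> Aset u then 1 else 0)"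
    using finite_P by (intro card_filter_sum) simp
  moreover have "{x\<in>P - {Inl u}. x \<in> Aset u} = Aset u" using A_sub by blast
  ultimately show ?thesis by simp
qed

lemma sum_split: "u \<in> IC \<Longrightarrow> sum f P = f (Inl u) + sum f (P - {Inl u})"
  using uP finite_P by (simp add: sum.remove)

lemma Phi_pp:
  assumes u: "u \<in> IC" and f: "f \<in> pp (P - {Inl u}) le \<omega>"
  shows "Phi u f \<in> pp P le \<omega>"
  unfolding pp_def
proof (intro CollectI conjI allI impI ballI)
  fix x assume "x \<notin> P" then have a: "x \<notin> P - {Inl u}" by simp
  show "Phi u f x = 0" unfolding Phi_def by (rule if_not_P[OF a])
next
  fix x y assume x: "x \<in> P" and y: "y \<in> P" and le: "le x y"
  have goal: "Phi u f y \<le> Phi u f x \<and> (\<omega> y < \<omega> x \<longrightarrow> Phi u f y < Phi u f x)"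
  proof (cases "x = Inl u")
    case True
    then have "y = Inl u" using u_max[OF u y] le by simp
    then show ?thesis using True by simp
  next
    case xne: False
    show ?thesis
    proof (cases "y = Inl u")
      case True
      have "\<omega> y < \<omega> x \<Longrightarrow> 0 < Phi u f x"
      proof -
        assume w: "\<omega> y < \<omega> x"
        show "0 < Phi u f x"
        proof (cases "x \<in> Aset u")
          case True then show ?thesis unfolding Phi_def using x xne by simp
        next
          case False
          then have "\<omega> x < \<omega> (Inl u)" using below_u[OF u x xne False] le True by simp
          then show ?thesis using w True by simp
        qed
      qed
      then show ?thesis using True unfolding Phi_def by simp
    next
      case yne: False
      have x': "x \<in> P - {Inl u}" and y': "y \<in> P - {Inl u}" using x y xne yne by auto
      have fc: "f y \<le> f x" "\<omega> y < \<omega> x \<longrightarrow> f y < f x" using f x' y' le unfolding pp_def by auto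
      have "(x \<in> Aset u) = (y \<in> Aset u)"
        using incomp[OF u _ y yne] incomp[OF u _ x xne] le by blast
      then show ?thesis unfolding Phi_def using fc x' y' by auto
    qed
  qed
  show "Phi u f y \<le> Phi u f x" using goal by simp
  show "\<omega> y < \<omega> x \<Longrightarrow> Phi u f y < Phi u f x" using goal by simp
qed

lemma Psi_pp:
  assumes u: "u \<in> IC" and f: "f \<in> pp P le \<omega>" and pos: "\<forall>x\<in>Aset u. 1 \<le> f x"
  shows "Psi u f \<in> pp (P - {Inl u}) le \<omega>"
  unfolding pp_def
proof (intro CollectI conjI allI impI ballI)
  fix x assume a: "x \<notin> P - {Inl u}" show "Psi u f x = 0" unfolding Psi_def by (rule if_not_P[OF a])
next
  fix x y assume x': "x \<in> P - {Inl u}" and y': "y \<in> P - {Inl u}" and le: "le x y"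
  have x: "x \<in> P" "x \<noteq> Inl u" and y: "y \<in> P" "y \<noteq> Inl u" using x' y' by auto
  have fc: "f y \<le> f x" "\<omega> y < \<omega> x \<longrightarrow> f y < f x" using f x y le unfolding pp_def by auto
  have same: "(x \<in> Aset u) = (y \<in> Aset u)"
    using incomp[OF u _ y] incomp[OF u _ x] le by blast
  have goal: "Psi u f y \<le> Psi u f x \<and> (\<omega> y < \<omega> x \<longrightarrow> Psi u f y < Psi u f x)"
  proof (cases "x \<in> Aset u")
    case True
    then have "y \<in> Aset u" using same by simp
    then have "1 \<le> f x" "1 \<le> f y" using pos True by blast+
    then show ?thesis unfolding Psi_def using fc x' y' True \<open>y \<in> Aset u\<close> by auto
  next
    case False
    then have "y \<notin> Aset u" using same by simp
    then show ?thesis unfolding Psi_def using fc x' y' False by auto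
  qed
  show "Psi u f y \<le> Psi u f x" using goal by simp
  show "\<omega> y < \<omega> x \<Longrightarrow> Psi u f y < Psi u f x" using goal by simp
qed

lemma sum_Phi:
  assumes u: "u \<in> IC"
  shows "sum (Phi u f) P = sum f (P - {Inl u}) + card (Aset u)"
proof -
  have "sum (Phi u f) P = Phi u f (Inl u) + sum (Phi u f) (P - {Inl u})" using sum_split[OF u] .
  also have "... = sum (\<lambda>x. f x + (if x \<in> Aset u then 1 else 0)) (P - {Inl u})"
  proof -
    have "Phi u f (Inl u) = 0" unfolding Phi_def by simp
    moreover have "sum (Phi u f) (P - {Inl u}) = sum (\<lambda>x. f x + (if x \<in> Aset u then 1 else 0)) (P - {Inl u})"
      unfolding Phi_def by (intro sum.cong) auto
    ultimately show ?thesis by simp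
  qed
  also have "... = sum f (P - {Inl u}) + card (Aset u)" using sum_ind by (simp add: sum.distrib)
  finally show ?thesis .
qed

lemma sum_Psi:
  assumes u: "u \<in> IC" and fu: "f (Inl u) = 0" and pos: "\<forall>x\<in>Aset u. 1 \<le> f x"
  shows "sum (Psi u f) (P - {Inl u}) + card (Aset u) = sum f P"
proof -
  have le1: "\<And>x. x \<in> P - {Inl u} \<Longrightarrow> (if x \<in> Aset u then 1 else 0) \<le> f x" using pos by simp
  have "sum (Psi u f) (P - {Inl u}) = sum (\<lambda>x. f x - (if x \<in> Aset u then 1 else 0)) (P - {Inl u})"
    unfolding Psi_def by (intro sum.cong) auto
  also have "... = sum f (P - {Inl u}) - card (Aset u)"
    using sum_subtractf_nat[of "P - {Inl u}" "\<lambda>x. if x \<in> Aset u then 1 else 0" f] le1 sum_ind by simp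
  finally have a: "sum (Psi u f) (P - {Inl u}) = sum f (P - {Inl u}) - card (Aset u)" .
  have "card (Aset u) \<le> sum f (P - {Inl u})"
    using sum_mono[of "P - {Inl u}" "\<lambda>x. if x \<in> Aset u then 1 else 0" f] le1 sum_ind by simp
  then show ?thesis using a sum_split[OF u, of f] fu by simp
qed

lemma card_piece:
  assumes u: "u \<in> IC"
  shows "card (piece u N) = card (Tset u N)"
proof -
  have "bij_betw (Phi u) (Tset u N) (piece u N)"
  proof (rule bij_betw_byWitness[where f' = "Psi u"])
    show "\<forall>a\<in>Tset u N. Psi u (Phi u a) = a"
    proof
      fix f assume f: "f \<in> Tset u N"
      show "Psi u (Phi u f) = f"
      proof
        fix x show "Psi u (Phi u f) x = f x"
          using f unfolding Psi_def Phi_def Tset_def pp_def by auto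
      qed
    qed
    show "\<forall>a\<in>piece u N. Phi u (Psi u a) = a"
    proof
      fix f assume f: "f \<in> piece u N"
      then have fp: "f \<in> pp P le \<omega>" and fu: "f (Inl u) = 0"
        and mn: "\<forall>v\<in>IC. content v < content u \<longrightarrow> f (Inl v) \<noteq> 0" unfolding piece_def by auto
      have pos: "\<forall>x\<in>Aset u. 1 \<le> f x" using A_pos[OF u fp fu mn] by blast
      show "Phi u (Psi u f) = f"
      proof
        fix x show "Phi u (Psi u f) x = f x"
        proof (cases "x \<in> P - {Inl u}")
          case True
          then show ?thesis unfolding Psi_def Phi_def using pos by auto
        next
          case False
          then have "x = Inl u \<or> x \<notin> P" by auto
          then show ?thesis unfolding Psi_def Phi_def using fu fp unfolding pp_def by auto
        qed
      qed
    qed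
    show "Phi u ` Tset u N \<subseteq> piece u N"
    proof
      fix g assume "g \<in> Phi u ` Tset u N"
      then obtain f where f: "f \<in> Tset u N" and g: "g = Phi u f" by auto
      have fp: "f \<in> pp (P - {Inl u}) le \<omega>" and fs: "sum f (P - {Inl u}) + card (Aset u) = N"
        using f unfolding Tset_def by auto
      have "g \<in> pp P le \<omega>" using Phi_pp[OF u fp] g by simp
      moreover have "sum g P = N" using sum_Phi[OF u] fs g by simp
      moreover have "g (Inl u) = 0" unfolding g Phi_def by simp
      moreover have "\<exists>x\<in>P. g x = 0" using uP[OF u] \<open>g (Inl u) = 0\<close> by blast
      moreover have "\<forall>v\<in>IC. content v < content u \<longrightarrow> g (Inl v) \<noteq> 0"
      proof (intro ballI impI)
        fix v assume v: "v \<in> IC" "content v < content u"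
        have vP: "Inl v \<in> P" using uP[OF v(1)] .
        have "Inl v \<in> Aset u" using A_iff vP v by simp
        moreover have "Inl v \<noteq> Inl u" using v by auto
        ultimately show "g (Inl v) \<noteq> 0" unfolding g Phi_def using vP by simp
      qed
      ultimately show "g \<in> piece u N" unfolding piece_def by blast
    qed
    show "Psi u ` piece u N \<subseteq> Tset u N"
    proof
      fix g assume "g \<in> Psi u ` piece u N"
      then obtain f where f: "f \<in> piece u N" and g: "g = Psi u f" by auto
      then have fp: "f \<in> pp P le \<omega>" and fu: "f (Inl u) = 0" and fs: "sum f P = N"
        and mn: "\<forall>v\<in>IC. content v < content u \<longrightarrow> f (Inl v) \<noteq> 0" unfolding piece_def by auto
      have pos: "\<forall>x\<in>Aset u. 1 \<le> f x" using A_pos[OF u fp fu mn] by blast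
      show "g \<in> Tset u N" unfolding Tset_def g
        using Psi_pp[OF u fp pos] sum_Psi[OF u fu pos] fs by simp
    qed
  qed
  then show ?thesis by (simp add: bij_betw_same_card)
qed

lemma card_Tset:
  "card (Tset u N) = (if card (Aset u) \<le> N then
      card {f \<in> pp (P - {Inl u}) le \<omega>. sum f (P - {Inl u}) = N - card (Aset u)} else 0)"
proof (cases "card (Aset u) \<le> N")
  case True
  then have "Tset u N = {f \<in> pp (P - {Inl u}) le \<omega>. sum f (P - {Inl u}) = N - card (Aset u)}"
    unfolding Tset_def by auto
  then show ?thesis using True by simp
next
  case False
  then have "Tset u N = {}" unfolding Tset_def by auto
  then show ?thesis using False by simp
qed

lemma finite_IC: "finite IC"
  using ic_S finite_S by (meson finite_subset subsetI)

lemma Zs_union: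
  "{f \<in> pp P le \<omega>. sum f P = N \<and> (\<exists>x\<in>P. f x = 0)} = (\<Union>u\<in>IC. piece u N)"
proof (rule set_eqI, rule iffI)
  fix f assume f: "f \<in> {f \<in> pp P le \<omega>. sum f P = N \<and> (\<exists>x\<in>P. f x = 0)}"
  then have fp: "f \<in> pp P le \<omega>" and fs: "sum f P = N" and ex: "\<exists>x\<in>P. f x = 0" by auto
  then obtain x where x: "x \<in> P" "f x = 0" by blast
  obtain v0 where v0: "v0 \<in> IC" "f (Inl v0) = 0" using zero_corner[OF fp x] by blast
  let ?Z = "{v\<in>IC. f (Inl v) = 0}"
  have fZ: "finite ?Z" using finite_IC by simp
  have neZ: "?Z \<noteq> {}" using v0 by blast
  have "Min (content ` ?Z) \<in> content ` ?Z" using fZ neZ by (intro Min_in) auto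
  then obtain u where u: "u \<in> ?Z" "content u = Min (content ` ?Z)" by auto
  have umin: "\<And>v. v \<in> ?Z \<Longrightarrow> content u \<le> content v" using u fZ by (simp add: Min_le)
  have mn: "\<forall>v\<in>IC. content v < content u \<longrightarrow> f (Inl v) \<noteq> 0"
  proof (intro ballI impI)
    fix v assume v: "v \<in> IC" "content v < content u"
    show "f (Inl v) \<noteq> 0"
    proof
      assume "f (Inl v) = 0"
      then have "v \<in> ?Z" using v by simp
      then have "content u \<le> content v" using umin by blast
      then show False using v by simp
    qed
  qed
  have fu: "f (Inl u) = 0" using u by simp
  have "f \<in> piece u N" unfolding piece_def using fp fs ex fu mn by blast
  then show "f \<in> (\<Union>u\<in>IC. piece u N)" using u by blast
next
  fix f assume "f \<in> (\<Union>u\<in>IC. piece u N)"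
  then show "f \<in> {f \<in> pp P le \<omega>. sum f P = N \<and> (\<exists>x\<in>P. f x = 0)}" unfolding piece_def by blast
qed

lemma card_Zs:
  "card {f \<in> pp P le \<omega>. sum f P = N \<and> (\<exists>x\<in>P. f x = 0)} = (\<Sum>u\<in>IC. card (piece u N))"
proof -
  have disj: "\<forall>u\<in>IC. \<forall>u'\<in>IC. u \<noteq> u' \<longrightarrow> piece u N \<inter> piece u' N = {}"
  proof (intro ballI impI)
    fix u u' assume u: "u \<in> IC" and u': "u' \<in> IC" and ne: "u \<noteq> u'"
    have "content u \<noteq> content u'" using content_inj[OF ic_S[OF u] ic_S[OF u']] ne by auto
    then have "content u < content u' \<or> content u' < content u" by auto
    then show "piece u N \<inter> piece u' N = {}"
    proof
      assume lt: "content u < content u'"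
      show ?thesis
      proof (rule ccontr)
        assume "piece u N \<inter> piece u' N \<noteq> {}"
        then obtain f where "f \<in> piece u N" "f \<in> piece u' N" by blast
        then have "f (Inl u) = 0" "\<forall>v\<in>IC. content v < content u' \<longrightarrow> f (Inl v) \<noteq> 0"
          unfolding piece_def by blast+
        then show False using lt u by blast
      qed
    next
      assume lt: "content u' < content u"
      show ?thesis
      proof (rule ccontr)
        assume "piece u N \<inter> piece u' N \<noteq> {}"
        then obtain f where "f \<in> piece u N" "f \<in> piece u' N" by blast
        then have "f (Inl u') = 0" "\<forall>v\<in>IC. content v < content u \<longrightarrow> f (Inl v) \<noteq> 0"
          unfolding piece_def by blast+
        then show False using lt u' by blast
      qed
    qed
  qed
  have fin: "\<forall>u\<in>IC. finite (piece u N)"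
  proof
    fix u assume "u \<in> IC"
    have sub: "piece u N \<subseteq> {f \<in> pp P le \<omega>. sum f P = N \<and> True}" unfolding piece_def by blast
    show "finite (piece u N)" using finite_subset[OF sub finite_ppN[OF finite_P, of le \<omega> N "\<lambda>_. True"]] .
  qed
  show ?thesis unfolding Zs_union using card_UN_disjoint[OF finite_IC fin disj] .
qed

end

lemma sum_Sigma_pair:
  assumes "finite A" "\<And>a. a \<in> A \<Longrightarrow> finite (B a)"
  shows "(\<Sum>a\<in>A. \<Sum>b\<in>B a. h (a, b)) = (\<Sum>y\<in>Sigma A B. h y)"
proof -
  have "(\<Sum>a\<in>A. \<Sum>b\<in>B a. h (a, b)) = (\<Sum>(a, b)\<in>Sigma A B. h (a, b))"
    using assms by (intro sum.Sigma) auto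
  also have "(\<lambda>(a, b). h (a, b)) = h" by (simp add: fun_eq_iff)
  finally show ?thesis .
qed

context mob begin

lemma descset_sub: "descset R w g \<subseteq> {1..card R - 1}"
  unfolding descset_def by auto

lemma count_eq:
  fixes m :: nat
  assumes D: "D \<subseteq> {1..m}"
  shows "card {s \<in> Seq m D. sum s {1..m} = N} = (if (\<Sum>j\<in>D. j) \<le> N then Wc m (N - (\<Sum>j\<in>D. j)) else 0)"
  using SeqN_shift[OF D, of N] by simp

theorem main_mob:
  "emaj P le \<omega> q = (\<Sum>u\<in>IC. q ^ card (Aset u) * emaj (P - {Inl u}) le \<omega> q)"
proof -
  obtain c where cS: "c \<in> S" using S_ne by blast
  have PnE: "P \<noteq> {}" using cS unfolding mob_carrier_def by blast
  have n1: "1 \<le> card P" using PnE finite_P by (simp add: Suc_le_eq card_gt_0_iff)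
  obtain m where nm: "card P = Suc m" using n1 by (cases "card P") auto
  have fP: "fund P \<omega>" unfolding fund_def using finite_P inj by simp
  have fPu: "fund (P - {Inl u}) \<omega>" for u
    unfolding fund_def using finite_P inj_on_subset[OF inj] by auto
  have cPu: "card (P - {Inl u}) = m" if "u \<in> IC" for u
    using uP[OF that] finite_P nm by simp
  define L where "L = lin_exts P le"
  define L' where "L' u = lin_exts (P - {Inl u}) le" for u
  define \<alpha> where "\<alpha> g = maj_of P \<omega> g" for g
  define \<beta> where "\<beta> = (\<lambda>(u, g). card (Aset u) + maj_of (P - {Inl u}) \<omega> g)"
  have bsimp: "\<beta> (u, g) = card (Aset u) + maj_of (P - {Inl u}) \<omega> g" for u g
    unfolding \<beta>_def by simp
  define Y where "Y = (SIGMA u:IC. L' u)"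
  define V where "V = Wc m"
  have finL: "finite L" unfolding L_def using finite_lin_exts[OF finite_P] .
  have finL': "finite (L' u)" for u unfolding L'_def using finite_lin_exts finite_P by blast
  have finY: "finite Y" unfolding Y_def using finite_IC finL' by blast
  have key: "(\<Sum>g\<in>L. if \<alpha> g \<le> N then V (N - \<alpha> g) else 0) =
             (\<Sum>y\<in>Y. if \<beta> y \<le> N then V (N - \<beta> y) else 0)" for N
  proof -
    have "card {f \<in> pp P le \<omega>. sum f P = N \<and> (\<exists>x\<in>P. f x = 0)} =
      (\<Sum>g\<in>L. card {s \<in> Seq (card P) (descset P \<omega> g). sum s {1..card P} = N \<and> s (card P) = 0})"
      unfolding L_def using fund.card_ppZ[OF fP n1, of le N] .
    also have "... = (\<Sum>g\<in>L. if \<alpha> g \<le> N then V (N - \<alpha> g) else 0)"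
    proof (intro sum.cong refl)
      fix g assume "g \<in> L"
      have Dm: "descset P \<omega> g \<subseteq> {1..m}" using descset_sub[of P \<omega> g] nm by simp
      have "card {s \<in> Seq (card P) (descset P \<omega> g). sum s {1..card P} = N \<and> s (card P) = 0}
          = card {s \<in> Seq m (descset P \<omega> g). sum s {1..m} = N \<and> True}"
        unfolding nm using SeqN_zero[OF Dm, of N] by simp
      also have "... = (if \<alpha> g \<le> N then V (N - \<alpha> g) else 0)"
        using SeqN_shift[OF Dm, of N] unfolding \<alpha>_def V_def maj_descset by simp
      finally show "card {s \<in> Seq (card P) (descset P \<omega> g). sum s {1..card P} = N \<and> s (card P) = 0}
          = (if \<alpha> g \<le> N then V (N - \<alpha> g) else 0)" .
    qed
    finally have lhs: "card {f \<in> pp P le \<omega>. sum f P = N \<and> (\<exists>x\<in>P. f x = 0)} =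
        (\<Sum>g\<in>L. if \<alpha> g \<le> N then V (N - \<alpha> g) else 0)" .
    have inner: "card {f \<in> pp (P - {Inl u}) le \<omega>. sum f (P - {Inl u}) = M} =
        (\<Sum>g\<in>L' u. if maj_of (P - {Inl u}) \<omega> g \<le> M then V (M - maj_of (P - {Inl u}) \<omega> g) else 0)"
      if u: "u \<in> IC" for u M
    proof -
      have "card {f \<in> pp (P - {Inl u}) le \<omega>. sum f (P - {Inl u}) = M} =
        (\<Sum>g\<in>L' u. card {s \<in> Seq (card (P - {Inl u})) (descset (P - {Inl u}) \<omega> g).
            sum s {1..card (P - {Inl u})} = M})"
        unfolding L'_def using fund.card_ppN[OF fPu[of u], where le = le and N = M] .
      also have "... = (\<Sum>g\<in>L' u. if maj_of (P - {Inl u}) \<omega> g \<le> M then V (M - maj_of (P - {Inl u}) \<omega> g) else 0)"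
      proof (intro sum.cong refl)
        fix g assume "g \<in> L' u"
        have Dm: "descset (P - {Inl u}) \<omega> g \<subseteq> {1..m}"
        proof
          fix x assume "x \<in> descset (P - {Inl u}) \<omega> g"
          then have "x \<in> {1..card (P - {Inl u}) - 1}" using descset_sub[of "P - {Inl u}" \<omega> g] by blast
          then show "x \<in> {1..m}" using cPu[OF u] by (simp; linarith)
        qed
        show "card {s \<in> Seq (card (P - {Inl u})) (descset (P - {Inl u}) \<omega> g).
            sum s {1..card (P - {Inl u})} = M} =
            (if maj_of (P - {Inl u}) \<omega> g \<le> M then V (M - maj_of (P - {Inl u}) \<omega> g) else 0)"
          unfolding cPu[OF u] V_def maj_descset using count_eq[OF Dm, of M] .
      qed
      finally show ?thesis .
    qed
    have "card {f \<in> pp P le \<omega>. sum f P = N \<and> (\<exists>x\<in>P. f x = 0)} = (\<Sum>u\<in>IC. card (piece u N))"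
      using card_Zs .
    also have "... = (\<Sum>u\<in>IC. \<Sum>g\<in>L' u. if \<beta> (u, g) \<le> N then V (N - \<beta> (u, g)) else 0)"
    proof (intro sum.cong refl)
      fix u assume u: "u \<in> IC"
      have "card (piece u N) = card (Tset u N)" using card_piece[OF u] .
      also have "... = (if card (Aset u) \<le> N then
          card {f \<in> pp (P - {Inl u}) le \<omega>. sum f (P - {Inl u}) = N - card (Aset u)} else 0)"
        using card_Tset .
      also have "... = (\<Sum>g\<in>L' u. if \<beta> (u, g) \<le> N then V (N - \<beta> (u, g)) else 0)"
      proof (cases "card (Aset u) \<le> N")
        case True
        have "(\<Sum>g\<in>L' u. if maj_of (P - {Inl u}) \<omega> g \<le> N - card (Aset u)
               then V (N - card (Aset u) - maj_of (P - {Inl u}) \<omega> g) else 0) =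
              (\<Sum>g\<in>L' u. if \<beta> (u, g) \<le> N then V (N - \<beta> (u, g)) else 0)"
          using True by (intro sum.cong refl) (auto simp: bsimp diff_diff_add)
        then show ?thesis using inner[OF u, of "N - card (Aset u)"] True by simp
      next
        case False
        then show ?thesis by (simp add: bsimp)
      qed
      finally show "card (piece u N) = (\<Sum>g\<in>L' u. if \<beta> (u, g) \<le> N then V (N - \<beta> (u, g)) else 0)" .
    qed
    also have "... = (\<Sum>y\<in>Y. if \<beta> y \<le> N then V (N - \<beta> y) else 0)"
      unfolding Y_def using sum_Sigma_pair[OF finite_IC finL', of "\<lambda>y. if \<beta> y \<le> N then V (N - \<beta> y) else 0"] .
    finally show ?thesis using lhs by simp
  qed
  have cnt: "card {g\<in>L. \<alpha> g = k} = card {y\<in>Y. \<beta> y = k}" for k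
    using cancel_lemma[OF finL finY, of V \<alpha> \<beta> k] key unfolding V_def using Wc_0 by blast
  have "emaj P le \<omega> q = (\<Sum>g\<in>L. q ^ \<alpha> g)" unfolding emaj_def L_def \<alpha>_def ..
  also have "... = (\<Sum>y\<in>Y. q ^ \<beta> y)" using sum_by_card[OF finL finY cnt, of "\<lambda>k. q ^ k"] .
  also have "... = (\<Sum>u\<in>IC. \<Sum>g\<in>L' u. q ^ \<beta> (u, g))"
    unfolding Y_def using sum_Sigma_pair[OF finite_IC finL', of "\<lambda>y. q ^ \<beta> y"] by simp
  also have "... = (\<Sum>u\<in>IC. q ^ card (Aset u) * emaj (P - {Inl u}) le \<omega> q)"
    unfolding bsimp emaj_def L'_def by (simp add: power_add sum_distrib_left)
  finally show ?thesis .
qed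

end

theorem lemma4p2:
  fixes la mu :: "nat list"
    and H :: "'b set" and hle :: "'b \<Rightarrow> 'b \<Rightarrow> bool" and att :: "'b \<Rightarrow> nat \<times> nat"
    and \<omega> :: "(nat \<times> nat) + 'b \<Rightarrow> int"
    and q :: "'c::comm_semiring_1"
  assumes strip: "border_strip la mu"
    and mobile: "mobile_data (skew la mu) H hle att"
    and inj: "inj_on \<omega> (mob_carrier (skew la mu) H)"
    and rev_schur: "\<forall>c\<in>skew la mu. \<forall>d\<in>skew la mu.
                      content c < content d \<longrightarrow> \<omega> (Inl d) < \<omega> (Inl c)"
    and natural: "\<forall>x\<in>Inr ` H. \<forall>y\<in>mob_carrier (skew la mu) H.
                    covers (mob_carrier (skew la mu) H) (mob_le hle att) x y \<longrightarrow> \<omega> x < \<omega> y"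
  shows "emaj (mob_carrier (skew la mu) H) (mob_le hle att) \<omega> q =
    (\<Sum>u\<in>inner_corners la mu.
       q ^ card (Inl ` {c \<in> skew la mu. content c < content u} \<union>
                 Inr ` {b \<in> H. content (att b) < content u})
       * emaj (mob_carrier (skew la mu) H - {Inl u}) (mob_le hle att) \<omega> q)"
proof -
  interpret M: mob la mu H hle att \<omega>
    unfolding mob_def mob_axioms_def bstrip_def using assms by blast
  show ?thesis using M.main_mob[of q] unfolding M.Aset_def .
qed


end
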